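(* Let $R$ be a commutative ring with finitely many minimal prime ideals which is a multiplication ring; equivalently, $R\cong \prod_{i=1}^{n} D_{i}$ is a finite direct product of rings where each $D_{i}$ is either a Dedekind domain or an Artinian, local principal ideal ring. Let $1=e_1+\cdots+e_n$ be the corresponding decomposition of $1$ into central orthogonal idempotents of $R$ (so $e_iR\cong D_i$). Let $M$ be an $R$-module and write $M=\bigoplus_{i=1}^n M_i$ where $M_i:=e_iM$ (a $D_i$-module). Then $M$ is a multiplication $R$-module if and only if for each $i=1,\ldots,n$ the $D_i$-module $M_i$ is isomorphic to $D_i$, or to $D_i/I_i$ for some nonzero ideal $I_i$ of $D_i$, or (only in the case when $D_i$ is a Dedekind domain) to a nonzero ideal of $D_i$.
   Context: All rings are commutative with $1$ and all modules are unital. A ring $R$ is a multiplication ring if whenever $I,J$ are ideals of $R$ with $J\subseteq I$, there is an ideal $I'$ of $R$ with $J=I'I$. An $R$-module $M$ is a multiplication module if every submodule of $M$ equals $IM$ for some ideal $I$ of $R$. *)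

theory Defs
  imports "HOL-Algebra.Algebra"
begin

definition multiplication_ring :: "('a, 'b) ring_scheme \<Rightarrow> bool" where
  "multiplication_ring R \<longleftrightarrow>
     (\<forall>I J. ideal I R \<longrightarrow> ideal J R \<longrightarrow> J \<subseteq> I \<longrightarrow>
        (\<exists>I'. ideal I' R \<and> J = I' \<cdot>\<^bsub>R\<^esub> I))"

definition minimal_primes :: "('a, 'b) ring_scheme \<Rightarrow> 'a set set" where
  "minimal_primes R =
     {P. primeideal P R \<and> (\<forall>Q. primeideal Q R \<longrightarrow> Q \<subseteq> P \<longrightarrow> Q = P)}"

definition dedekind_domain :: "('a, 'b) ring_scheme \<Rightarrow> bool" where
  "dedekind_domain D \<longleftrightarrow> domain D \<and>
     (\<forall>I. ideal I D \<longrightarrow> I \<noteq> {\<zero>\<^bsub>D\<^esub>} \<longrightarrow> I \<noteq> carrier D \<longrightarrow>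
        (\<exists>Ps. Ps \<noteq> [] \<and> (\<forall>P\<in>set Ps. primeideal P D) \<and>
              I = foldr (ideal_prod D) Ps (carrier D)))"

definition artinian_ring :: "('a, 'b) ring_scheme \<Rightarrow> bool" where
  "artinian_ring D \<longleftrightarrow> ring D \<and>
     \<not> (\<exists>f :: nat \<Rightarrow> 'a set. \<forall>k. ideal (f k) D \<and> f (Suc k) \<subset> f k)"

definition local_ring :: "('a, 'b) ring_scheme \<Rightarrow> bool" where
  "local_ring D \<longleftrightarrow> cring D \<and> (\<exists>!m. maximalideal m D)"

definition principal_ideal_ring :: "('a, 'b) ring_scheme \<Rightarrow> bool" where
  "principal_ideal_ring D \<longleftrightarrow> cring D \<and> (\<forall>I. ideal I D \<longrightarrow> principalideal I D)"

definition artinian_local_PIR :: "('a, 'b) ring_scheme \<Rightarrow> bool" where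
  "artinian_local_PIR D \<longleftrightarrow> artinian_ring D \<and> local_ring D \<and> principal_ideal_ring D"

definition component_ring :: "('a, 'b) ring_scheme \<Rightarrow> 'a \<Rightarrow> ('a, 'b) ring_scheme" where
  "component_ring R e = R\<lparr>carrier := (\<lambda>r. e \<otimes>\<^bsub>R\<^esub> r) ` carrier R, one := e\<rparr>"

inductive_set ideal_smult :: "('a, 'b) ring_scheme \<Rightarrow> 'a set \<Rightarrow> ('a, 'c, 'd) module_scheme \<Rightarrow> 'c set"
  for R I M where
    zero: "\<zero>\<^bsub>M\<^esub> \<in> ideal_smult R I M"
  | smult: "\<lbrakk>a \<in> I; m \<in> carrier M\<rbrakk> \<Longrightarrow> a \<odot>\<^bsub>M\<^esub> m \<in> ideal_smult R I M"
  | add: "\<lbrakk>x \<in> ideal_smult R I M; y \<in> ideal_smult R I M\<rbrakk> \<Longrightarrow> x \<oplus>\<^bsub>M\<^esub> y \<in> ideal_smult R I M"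

definition multiplication_module :: "('a, 'b) ring_scheme \<Rightarrow> ('a, 'c, 'd) module_scheme \<Rightarrow> bool" where
  "multiplication_module R M \<longleftrightarrow>
     (\<forall>N. submodule N R M \<longrightarrow> (\<exists>I. ideal I R \<and> N = ideal_smult R I M))"

definition component_module :: "('a, 'c, 'd) module_scheme \<Rightarrow> 'a \<Rightarrow> ('a, 'c, 'd) module_scheme" where
  "component_module M e = M\<lparr>carrier := (\<lambda>m. e \<odot>\<^bsub>M\<^esub> m) ` carrier M\<rparr>"

text \<open>D as a module over itself, restricted to the carrier I (I = carrier D gives D itself).\<close>
definition ideal_module :: "('a, 'b) ring_scheme \<Rightarrow> 'a set \<Rightarrow> ('a, 'a) module" where
  "ideal_module D I = \<lparr>carrier = I, monoid.mult = monoid.mult D, monoid.one = monoid.one D, ring.zero = ring.zero D,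
                        ring.add = ring.add D, module.smult = monoid.mult D\<rparr>"

definition quotient_module :: "('a, 'b) ring_scheme \<Rightarrow> 'a set \<Rightarrow> ('a, 'a set) module" where
  "quotient_module D I = \<lparr>carrier = carrier (D Quot I), monoid.mult = monoid.mult (D Quot I),
       monoid.one = monoid.one (D Quot I), ring.zero = ring.zero (D Quot I), ring.add = ring.add (D Quot I),
       module.smult = (\<lambda>r C. monoid.mult (D Quot I) (a_r_coset D I r) C)\<rparr>"

definition module_iso ::
  "('a, 'b) ring_scheme \<Rightarrow> ('a, 'c, 'd) module_scheme \<Rightarrow> ('a, 'e, 'f) module_scheme \<Rightarrow> ('c \<Rightarrow> 'e) set" where
  "module_iso D N N' = {f. bij_betw f (carrier N) (carrier N') \<and>
      (\<forall>x\<in>carrier N. \<forall>y\<in>carrier N. f (x \<oplus>\<^bsub>N\<^esub> y) = f x \<oplus>\<^bsub>N'\<^esub> f y) \<and>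
      (\<forall>a\<in>carrier D. \<forall>x\<in>carrier N. f (a \<odot>\<^bsub>N\<^esub> x) = a \<odot>\<^bsub>N'\<^esub> f x)}"

definition module_isomorphic ::
  "('a, 'b) ring_scheme \<Rightarrow> ('a, 'c, 'd) module_scheme \<Rightarrow> ('a, 'e, 'f) module_scheme \<Rightarrow> bool" where
  "module_isomorphic D N N' \<longleftrightarrow> module_iso D N N' \<noteq> {}"

end

theory Submission
  imports Defs
begin


lemma comp_ring_simps[simp]:
  "carrier (component_ring R e) = (\<lambda>r. e \<otimes>\<^bsub>R\<^esub> r) ` carrier R"
  "monoid.mult (component_ring R e) = monoid.mult R"
  "monoid.one (component_ring R e) = e"
  "ring.zero (component_ring R e) = ring.zero R"
  "ring.add (component_ring R e) = ring.add R"
  by (simp_all add: component_ring_def)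

lemma comp_mod_simps[simp]:
  "carrier (component_module M e) = (\<lambda>m. e \<odot>\<^bsub>M\<^esub> m) ` carrier M"
  "ring.zero (component_module M e) = ring.zero M"
  "ring.add (component_module M e) = ring.add M"
  "module.smult (component_module M e) = module.smult M"
  by (simp_all add: component_module_def)

context cring begin

lemma comp_carrier:
  assumes "e \<in> carrier R" "e \<otimes> e = e"
  shows "carrier (component_ring R e) = {r \<in> carrier R. e \<otimes> r = r}"
proof -
  have "e \<otimes> (e \<otimes> r) = e \<otimes> r" if "r \<in> carrier R" for r
    using assms that by (metis m_assoc)
  then show ?thesis using assms by force
qed

lemma comp_cring:
  assumes e: "e \<in> carrier R" "e \<otimes> e = e"
  shows "cring (component_ring R e)"
proof -
  let ?D = "component_ring R e"
  have C: "carrier ?D = {r \<in> carrier R. e \<otimes> r = r}" using comp_carrier[OF e] .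
  have ag: "abelian_group ?D"
  proof (rule abelian_groupI)
    fix x y assume "x \<in> carrier ?D" "y \<in> carrier ?D"
    then show "x \<oplus>\<^bsub>?D\<^esub> y \<in> carrier ?D" using C e by (simp add: r_distr)
  next
    show "\<zero>\<^bsub>?D\<^esub> \<in> carrier ?D" using C e by simp
  next
    fix x y z assume "x \<in> carrier ?D" "y \<in> carrier ?D" "z \<in> carrier ?D"
    then show "x \<oplus>\<^bsub>?D\<^esub> y \<oplus>\<^bsub>?D\<^esub> z = x \<oplus>\<^bsub>?D\<^esub> (y \<oplus>\<^bsub>?D\<^esub> z)" using C by (simp add: a_assoc)
  next
    fix x y assume "x \<in> carrier ?D" "y \<in> carrier ?D"
    then show "x \<oplus>\<^bsub>?D\<^esub> y = y \<oplus>\<^bsub>?D\<^esub> x" using C by (simp add: a_comm)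
  next
    fix x assume "x \<in> carrier ?D"
    then show "\<zero>\<^bsub>?D\<^esub> \<oplus>\<^bsub>?D\<^esub> x = x" using C by simp
  next
    fix x assume x: "x \<in> carrier ?D"
    then have "\<ominus> x \<in> carrier ?D" using C e by (simp add: r_minus)
    then show "\<exists>y\<in>carrier ?D. y \<oplus>\<^bsub>?D\<^esub> x = \<zero>\<^bsub>?D\<^esub>" using x C by (intro bexI[of _ "\<ominus> x"]) (simp_all add: l_neg)
  qed
  have cm: "comm_monoid ?D"
  proof (rule comm_monoidI)
    fix x y assume "x \<in> carrier ?D" "y \<in> carrier ?D"
    then show "x \<otimes>\<^bsub>?D\<^esub> y \<in> carrier ?D" using C e by (simp add: m_assoc[symmetric])
  next
    show "\<one>\<^bsub>?D\<^esub> \<in> carrier ?D" using C e by simp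
  next
    fix x y z assume "x \<in> carrier ?D" "y \<in> carrier ?D" "z \<in> carrier ?D"
    then show "x \<otimes>\<^bsub>?D\<^esub> y \<otimes>\<^bsub>?D\<^esub> z = x \<otimes>\<^bsub>?D\<^esub> (y \<otimes>\<^bsub>?D\<^esub> z)" using C by (simp add: m_assoc)
  next
    fix x assume "x \<in> carrier ?D"
    then show "\<one>\<^bsub>?D\<^esub> \<otimes>\<^bsub>?D\<^esub> x = x" using C by simp
  next
    fix x y assume "x \<in> carrier ?D" "y \<in> carrier ?D"
    then show "x \<otimes>\<^bsub>?D\<^esub> y = y \<otimes>\<^bsub>?D\<^esub> x" using C by (simp add: m_comm)
  qed
  show ?thesis
    by (rule cringI[OF ag cm]) (use C in \<open>simp add: l_distr\<close>)
qed

end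

lemma comp_module:
  fixes R (structure)
  assumes M: "module R M" and e: "e \<in> carrier R" "e \<otimes> e = e"
  shows "module (component_ring R e) (component_module M e)"
proof -
  interpret module R M by (rule M)
  let ?D = "component_ring R e" and ?N = "component_module M e"
  have C: "carrier ?D = {r \<in> carrier R. e \<otimes> r = r}" using comp_carrier[OF e] .
  have CN: "carrier ?N = {x \<in> carrier M. e \<odot>\<^bsub>M\<^esub> x = x}"
    using e by (force simp: smult_assoc1[symmetric])
  have ag: "abelian_group ?N"
  proof (rule abelian_groupI)
    fix x y assume "x \<in> carrier ?N" "y \<in> carrier ?N"
    then show "x \<oplus>\<^bsub>?N\<^esub> y \<in> carrier ?N" using CN e by (simp add: smult_r_distr)
  next
    show "\<zero>\<^bsub>?N\<^esub> \<in> carrier ?N" using CN e by simp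
  next
    fix x y z assume "x \<in> carrier ?N" "y \<in> carrier ?N" "z \<in> carrier ?N"
    then show "x \<oplus>\<^bsub>?N\<^esub> y \<oplus>\<^bsub>?N\<^esub> z = x \<oplus>\<^bsub>?N\<^esub> (y \<oplus>\<^bsub>?N\<^esub> z)" using CN by (simp add: M.a_assoc)
  next
    fix x y assume "x \<in> carrier ?N" "y \<in> carrier ?N"
    then show "x \<oplus>\<^bsub>?N\<^esub> y = y \<oplus>\<^bsub>?N\<^esub> x" using CN by (simp add: M.a_comm)
  next
    fix x assume "x \<in> carrier ?N"
    then show "\<zero>\<^bsub>?N\<^esub> \<oplus>\<^bsub>?N\<^esub> x = x" using CN by simp
  next
    fix x assume x: "x \<in> carrier ?N"
    then have "\<ominus>\<^bsub>M\<^esub> x \<in> carrier ?N" using CN e by (simp add: smult_r_minus)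
    then show "\<exists>y\<in>carrier ?N. y \<oplus>\<^bsub>?N\<^esub> x = \<zero>\<^bsub>?N\<^esub>" using x CN by (intro bexI[of _ "\<ominus>\<^bsub>M\<^esub> x"]) (simp_all add: M.l_neg)
  qed
  show ?thesis
  proof (rule moduleI[OF comp_cring[OF e] ag])
    fix a x assume "a \<in> carrier ?D" "x \<in> carrier ?N"
    then show "a \<odot>\<^bsub>?N\<^esub> x \<in> carrier ?N" using C CN e
      by (simp add: smult_assoc1[symmetric] m_comm)
  next
    fix a b x assume "a \<in> carrier ?D" "b \<in> carrier ?D" "x \<in> carrier ?N"
    then show "(a \<oplus>\<^bsub>?D\<^esub> b) \<odot>\<^bsub>?N\<^esub> x = a \<odot>\<^bsub>?N\<^esub> x \<oplus>\<^bsub>?N\<^esub> b \<odot>\<^bsub>?N\<^esub> x"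
      using C CN by (simp add: smult_l_distr)
  next
    fix a x y assume "a \<in> carrier ?D" "x \<in> carrier ?N" "y \<in> carrier ?N"
    then show "a \<odot>\<^bsub>?N\<^esub> (x \<oplus>\<^bsub>?N\<^esub> y) = a \<odot>\<^bsub>?N\<^esub> x \<oplus>\<^bsub>?N\<^esub> a \<odot>\<^bsub>?N\<^esub> y"
      using C CN by (simp add: smult_r_distr)
  next
    fix a b x assume "a \<in> carrier ?D" "b \<in> carrier ?D" "x \<in> carrier ?N"
    then show "(a \<otimes>\<^bsub>?D\<^esub> b) \<odot>\<^bsub>?N\<^esub> x = a \<odot>\<^bsub>?N\<^esub> (b \<odot>\<^bsub>?N\<^esub> x)"
      using C CN by (simp add: smult_assoc1)
  next
    fix x assume "x \<in> carrier ?N"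
    then show "\<one>\<^bsub>?D\<^esub> \<odot>\<^bsub>?N\<^esub> x = x" using CN by simp
  qed
qed


lemma (in cring) ideal_char:
  "ideal I R \<longleftrightarrow> I \<subseteq> carrier R \<and> \<zero> \<in> I \<and> (\<forall>x\<in>I. \<forall>y\<in>I. x \<oplus> y \<in> I) \<and>
     (\<forall>a\<in>carrier R. \<forall>x\<in>I. a \<otimes> x \<in> I)"
proof
  assume "ideal I R"
  then interpret ideal I R .
  show "I \<subseteq> carrier R \<and> \<zero> \<in> I \<and> (\<forall>x\<in>I. \<forall>y\<in>I. x \<oplus> y \<in> I) \<and> (\<forall>a\<in>carrier R. \<forall>x\<in>I. a \<otimes> x \<in> I)"
    by (auto intro: I_l_closed)
next
  assume A: "I \<subseteq> carrier R \<and> \<zero> \<in> I \<and> (\<forall>x\<in>I. \<forall>y\<in>I. x \<oplus> y \<in> I) \<and> (\<forall>a\<in>carrier R. \<forall>x\<in>I. a \<otimes> x \<in> I)"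
  have neg: "\<ominus> x \<in> I" if "x \<in> I" for x
  proof -
    have "\<ominus> x = (\<ominus> \<one>) \<otimes> x" using that A by (auto simp: l_minus)
    then show ?thesis using A that by auto
  qed
  show "ideal I R"
  proof (rule idealI[OF ring_axioms])
    show "subgroup I (add_monoid R)"
      by (rule subgroup.intro) (use A neg in \<open>auto simp: a_inv_def[symmetric]\<close>)
  next
    fix a x assume "a \<in> I" "x \<in> carrier R" then show "x \<otimes> a \<in> I" using A by auto
  next
    fix a x assume "a \<in> I" "x \<in> carrier R" then show "a \<otimes> x \<in> I" using A m_comm[of a x] by (auto simp del: )
  qed
qed

definition msub :: "('a, 'b) ring_scheme \<Rightarrow> ('a, 'c, 'd) module_scheme \<Rightarrow> 'c set \<Rightarrow> bool" where
  "msub D N S \<longleftrightarrow> S \<subseteq> carrier N \<and> \<zero>\<^bsub>N\<^esub> \<in> S \<and> (\<forall>x\<in>S. \<forall>y\<in>S. x \<oplus>\<^bsub>N\<^esub> y \<in> S) \<and>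
     (\<forall>a\<in>carrier D. \<forall>x\<in>S. a \<odot>\<^bsub>N\<^esub> x \<in> S)"

lemma submodule_iff_msub:
  assumes "module D N"
  shows "submodule S D N \<longleftrightarrow> msub D N S"
proof
  interpret module D N by fact
  assume S: "submodule S D N"
  note E = submoduleE[OF S]
  obtain x where "x \<in> S" using E(2) by auto
  then have "\<zero>\<^bsub>N\<^esub> \<in> S" using E(1) E(4)[of "\<zero>\<^bsub>D\<^esub>" x] by auto
  then show "msub D N S" unfolding msub_def using E by auto
next
  interpret module D N by fact
  assume S: "msub D N S"
  show "submodule S D N"
  proof (rule submoduleI)
    fix a assume a: "a \<in> S"
    then have "\<ominus>\<^bsub>N\<^esub> a = (\<ominus>\<^bsub>D\<^esub> \<one>\<^bsub>D\<^esub>) \<odot>\<^bsub>N\<^esub> a" using S unfolding msub_def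
      by (subst smult_l_minus) auto
    then show "\<ominus>\<^bsub>N\<^esub> a \<in> S" using S a unfolding msub_def by auto
  qed (use S in \<open>auto simp: msub_def\<close>)
qed

lemma mult_module_iff:
  assumes "module D N"
  shows "multiplication_module D N \<longleftrightarrow>
    (\<forall>S. msub D N S \<longrightarrow> (\<exists>I. ideal I D \<and> S = ideal_smult D I N))"
  unfolding multiplication_module_def using submodule_iff_msub[OF assms] by simp

lemma ideal_smult_subset:
  assumes "module D N" "I \<subseteq> carrier D"
  shows "ideal_smult D I N \<subseteq> carrier N"
proof
  interpret module D N by fact
  fix x assume "x \<in> ideal_smult D I N" then show "x \<in> carrier N"
    by induct (use assms in auto)
qed


lemma comp_mod_carrier:
  fixes R (structure)
  assumes M: "module R M" and e: "e \<in> carrier R" "e \<otimes> e = e"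
  shows "carrier (component_module M e) = {x \<in> carrier M. e \<odot>\<^bsub>M\<^esub> x = x}"
proof -
  interpret module R M by (rule M)
  show ?thesis using e by (force simp: smult_assoc1[symmetric])
qed

lemma mult_comp:
  fixes R (structure)
  assumes M: "module R M" and e: "e \<in> carrier R" "e \<otimes> e = e"
    and mm: "multiplication_module R M"
  shows "multiplication_module (component_ring R e) (component_module M e)"
proof -
  interpret module R M by (rule M)
  let ?D = "component_ring R e" and ?N = "component_module M e"
  have C: "carrier ?D = {r \<in> carrier R. e \<otimes> r = r}" using comp_carrier[OF e] .
  have CN: "carrier ?N = {x \<in> carrier M. e \<odot>\<^bsub>M\<^esub> x = x}" using comp_mod_carrier[OF M e] .
  interpret D: cring ?D by (rule comp_cring[OF e])
  have modN: "module ?D ?N" by (rule comp_module[OF M e])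
  show ?thesis unfolding mult_module_iff[OF modN]
  proof (intro allI impI)
    fix S assume S: "msub ?D ?N S"
    have "msub R M S" unfolding msub_def
    proof (intro conjI ballI)
      show "S \<subseteq> carrier M" using S CN unfolding msub_def by auto
      show "\<zero>\<^bsub>M\<^esub> \<in> S" using S unfolding msub_def by auto
      fix x y assume "x \<in> S" "y \<in> S" then show "x \<oplus>\<^bsub>M\<^esub> y \<in> S" using S unfolding msub_def by auto
    next
      fix a x assume a: "a \<in> carrier R" and x: "x \<in> S"
      then have xN: "x \<in> carrier M" "e \<odot>\<^bsub>M\<^esub> x = x" using S CN unfolding msub_def by auto
      have "a \<odot>\<^bsub>M\<^esub> x = (e \<otimes> a) \<odot>\<^bsub>M\<^esub> x"
        using xN a e by (metis m_comm smult_assoc1)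
      moreover have "e \<otimes> a \<in> carrier ?D" using C a e by (auto simp: m_assoc[symmetric])
      ultimately show "a \<odot>\<^bsub>M\<^esub> x \<in> S" using S x unfolding msub_def by auto
    qed
    then have "submodule S R M" using submodule_iff_msub[OF M] by simp
    then obtain I where I: "ideal I R" "S = ideal_smult R I M" using mm unfolding multiplication_module_def by auto
    interpret I: ideal I R by (rule I(1))
    define J where "J = (\<lambda>a. e \<otimes> a) ` I"
    have J: "ideal J ?D" unfolding D.ideal_char
    proof (intro conjI ballI)
      show "J \<subseteq> carrier ?D" unfolding J_def using C e by (auto simp: m_assoc[symmetric])
      show "\<zero>\<^bsub>?D\<^esub> \<in> J" unfolding J_def using e by (auto intro!: image_eqI[of _ _ "\<zero>"])
      fix x y assume "x \<in> J" "y \<in> J"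
      then show "x \<oplus>\<^bsub>?D\<^esub> y \<in> J" unfolding J_def using e by (auto simp: r_distr[symmetric])
    next
      fix a x assume a: "a \<in> carrier ?D" and x: "x \<in> J"
      then obtain b where b: "b \<in> I" "x = e \<otimes> b" unfolding J_def by auto
      have ac: "a \<in> carrier R" using a C by auto
      have bc: "b \<in> carrier R" using b(1) I.Icarr by auto
      have "a \<otimes>\<^bsub>?D\<^esub> x = a \<otimes> (e \<otimes> b)" using b by simp
      also have "\<dots> = e \<otimes> (a \<otimes> b)" using ac bc e by (simp add: m_lcomm)
      finally have "a \<otimes>\<^bsub>?D\<^esub> x = e \<otimes> (a \<otimes> b)" .
      then show "a \<otimes>\<^bsub>?D\<^esub> x \<in> J" unfolding J_def using a b C by (auto intro: I.I_l_closed)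
    qed
    have sub1: "e \<odot>\<^bsub>M\<^esub> w \<in> ideal_smult ?D J ?N" if "w \<in> ideal_smult R I M" for w
      using that
    proof induct
      case zero then show ?case using e ideal_smult.zero[of ?N ?D J] by simp
    next
      case (smult a m)
      have "e \<odot>\<^bsub>M\<^esub> (a \<odot>\<^bsub>M\<^esub> m) = (e \<otimes> a) \<odot>\<^bsub>M\<^esub> (e \<odot>\<^bsub>M\<^esub> m)"
      proof -
        have ac: "a \<in> carrier R" using smult I.Icarr by auto
        have "(e \<otimes> a) \<odot>\<^bsub>M\<^esub> (e \<odot>\<^bsub>M\<^esub> m) = ((e \<otimes> a) \<otimes> e) \<odot>\<^bsub>M\<^esub> m"
          using smult ac e by (simp add: smult_assoc1)
        also have "(e \<otimes> a) \<otimes> e = e \<otimes> a" using ac e by (metis m_assoc m_comm)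
        also have "(e \<otimes> a) \<odot>\<^bsub>M\<^esub> m = e \<odot>\<^bsub>M\<^esub> (a \<odot>\<^bsub>M\<^esub> m)" using smult ac e by (simp add: smult_assoc1)
        finally show ?thesis by simp
      qed
      moreover have "e \<otimes> a \<in> J" unfolding J_def using smult by auto
      moreover have "e \<odot>\<^bsub>M\<^esub> m \<in> carrier ?N" using smult by auto
      ultimately show ?case using ideal_smult.smult[of "e \<otimes> a" J "e \<odot>\<^bsub>M\<^esub> m" ?N ?D] by simp
    next
      case (add x y)
      have "x \<in> carrier M" "y \<in> carrier M" using ideal_smult_subset[OF M] add I.Icarr by blast+
      then have "e \<odot>\<^bsub>M\<^esub> (x \<oplus>\<^bsub>M\<^esub> y) = e \<odot>\<^bsub>M\<^esub> x \<oplus>\<^bsub>M\<^esub> e \<odot>\<^bsub>M\<^esub> y"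
        using e by (simp add: smult_r_distr)
      then show ?case using add ideal_smult.add[of "e \<odot>\<^bsub>M\<^esub> x" ?D J ?N "e \<odot>\<^bsub>M\<^esub> y"] by simp
    qed
    have sub2: "w \<in> S" if "w \<in> ideal_smult ?D J ?N" for w
      using that
    proof induct
      case zero then show ?case using S unfolding msub_def by simp
    next
      case (smult j y)
      then obtain b where b: "b \<in> I" "j = e \<otimes> b" unfolding J_def by auto
      have y: "y \<in> carrier M" "e \<odot>\<^bsub>M\<^esub> y = y" using smult CN by auto
      have bc: "b \<in> carrier R" using b(1) I.Icarr by auto
      have "j \<odot>\<^bsub>?N\<^esub> y = (b \<otimes> e) \<odot>\<^bsub>M\<^esub> y" using b bc e by (simp add: m_comm)
      also have "\<dots> = b \<odot>\<^bsub>M\<^esub> y" using y bc e by (simp add: smult_assoc1)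
      finally have "j \<odot>\<^bsub>?N\<^esub> y = b \<odot>\<^bsub>M\<^esub> y" .
      then show ?case using I b y ideal_smult.smult[of b I y M R] by simp
    next
      case (add x y) then show ?case using S unfolding msub_def by simp
    qed
    have "S = ideal_smult ?D J ?N"
    proof
      show "S \<subseteq> ideal_smult ?D J ?N"
      proof
        fix x assume x: "x \<in> S"
        then have "e \<odot>\<^bsub>M\<^esub> x = x" using S CN unfolding msub_def by auto
        then show "x \<in> ideal_smult ?D J ?N" using sub1[of x] x I(2) by simp
      qed
      show "ideal_smult ?D J ?N \<subseteq> S" using sub2 by auto
    qed
    then show "\<exists>I. ideal I ?D \<and> S = ideal_smult ?D I ?N" using J by auto
  qed
qed


lemma ideal_zero: "ideal I D \<Longrightarrow> \<zero>\<^bsub>D\<^esub> \<in> I"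
  by (rule additive_subgroup.zero_closed[OF ideal.axioms(1)])
lemma ideal_add: "ideal I D \<Longrightarrow> x \<in> I \<Longrightarrow> y \<in> I \<Longrightarrow> x \<oplus>\<^bsub>D\<^esub> y \<in> I"
  by (rule additive_subgroup.a_closed[OF ideal.axioms(1)])
lemma ideal_lmult: "ideal I D \<Longrightarrow> x \<in> I \<Longrightarrow> a \<in> carrier D \<Longrightarrow> a \<otimes>\<^bsub>D\<^esub> x \<in> I"
  by (rule ideal.I_l_closed)
lemma ideal_sub: "ideal I D \<Longrightarrow> I \<subseteq> carrier D"
  by (rule additive_subgroup.a_subset[OF ideal.axioms(1)])

lemma (in module) finsum_smult_rdistr:
  "\<lbrakk> finite A; f \<in> A \<rightarrow> carrier R; x \<in> carrier M \<rbrakk> \<Longrightarrow>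
     (\<Oplus> i \<in> A. f i) \<odot>\<^bsub>M\<^esub> x = (\<Oplus>\<^bsub>M\<^esub> i \<in> A. f i \<odot>\<^bsub>M\<^esub> x)"
proof (induct A rule: finite_induct)
  case empty then show ?case by simp
next
  case (insert a F)
  then have "f \<in> F \<rightarrow> carrier R" "f a \<in> carrier R" by auto
  then show ?case using insert by (simp add: Pi_def smult_l_distr finsum_closed)
qed

lemma (in abelian_group) finsum_in_set:
  assumes "finite A" "f \<in> A \<rightarrow> T" "T \<subseteq> carrier G" "\<zero> \<in> T" "\<And>x y. x \<in> T \<Longrightarrow> y \<in> T \<Longrightarrow> x \<oplus> y \<in> T"
  shows "finsum G f A \<in> T"
  using assms(1,2)
proof (induct A rule: finite_induct)
  case empty then show ?case using assms by simp
next
  case (insert a F)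
  then have "f \<in> F \<rightarrow> carrier G" "f a \<in> carrier G" using assms(3) by auto
  then show ?case using insert assms by (simp add: Pi_def)
qed

lemma decomp_sum:
  fixes R (structure) and e :: "nat \<Rightarrow> _"
  assumes M: "module R M"
    and e: "\<forall>i<n. e i \<in> carrier R \<and> e i \<otimes> e i = e i"
    and sum1: "finsum R e {..<n} = \<one>"
    and x: "x \<in> carrier M"
  shows "x = (\<Oplus>\<^bsub>M\<^esub> i \<in> {..<n}. e i \<odot>\<^bsub>M\<^esub> x)"
proof -
  interpret module R M by (rule M)
  have "x = \<one> \<odot>\<^bsub>M\<^esub> x" using x by simp
  also have "\<dots> = (\<Oplus>\<^bsub>M\<^esub> i \<in> {..<n}. e i \<odot>\<^bsub>M\<^esub> x)"
  proof -
    have "e \<in> {..<n} \<rightarrow> carrier R" using e by auto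
    then show ?thesis using sum1[symmetric] finsum_smult_rdistr[OF finite_lessThan, where f=e and x=x] x by simp
  qed
  finally show ?thesis .
qed

lemma assemble:
  fixes R (structure) and e :: "nat \<Rightarrow> _"
  assumes M: "module R M"
    and e: "\<forall>i<n. e i \<in> carrier R \<and> e i \<otimes> e i = e i"
    and orth: "\<forall>i<n. \<forall>j<n. i \<noteq> j \<longrightarrow> e i \<otimes> e j = \<zero>"
    and sum1: "finsum R e {..<n} = \<one>"
    and mm: "\<forall>i<n. multiplication_module (component_ring R (e i)) (component_module M (e i))"
  shows "multiplication_module R M"
proof -
  interpret module R M by (rule M)
  show ?thesis unfolding mult_module_iff[OF M]
  proof (intro allI impI)
    fix S assume S: "msub R M S"
    have SM: "S \<subseteq> carrier M" using S unfolding msub_def by auto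
    have ex: "\<exists>J. i < n \<longrightarrow> ideal J (component_ring R (e i)) \<and>
        (\<lambda>x. e i \<odot>\<^bsub>M\<^esub> x) ` S = ideal_smult (component_ring R (e i)) J (component_module M (e i))"
      for i
    proof (cases "i < n")
      case False then show ?thesis by simp
    next
      case i: True
      have ei: "e i \<in> carrier R" "e i \<otimes> e i = e i" using e i by auto
      have modN: "module (component_ring R (e i)) (component_module M (e i))" by (rule comp_module[OF M ei])
      have C: "carrier (component_ring R (e i)) = {r \<in> carrier R. e i \<otimes> r = r}" using comp_carrier[OF ei] .
      have "msub (component_ring R (e i)) (component_module M (e i)) ((\<lambda>x. e i \<odot>\<^bsub>M\<^esub> x) ` S)"
        unfolding msub_def
      proof (intro conjI ballI)
        show "(\<lambda>x. e i \<odot>\<^bsub>M\<^esub> x) ` S \<subseteq> carrier (component_module M (e i))" using SM by auto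
        show "\<zero>\<^bsub>component_module M (e i)\<^esub> \<in> (\<lambda>x. e i \<odot>\<^bsub>M\<^esub> x) ` S"
          using S ei unfolding msub_def by (auto intro!: image_eqI[of _ _ "\<zero>\<^bsub>M\<^esub>"])
      next
        fix x y assume "x \<in> (\<lambda>x. e i \<odot>\<^bsub>M\<^esub> x) ` S" "y \<in> (\<lambda>x. e i \<odot>\<^bsub>M\<^esub> x) ` S"
        then obtain x' y' where "x' \<in> S" "y' \<in> S" "x = e i \<odot>\<^bsub>M\<^esub> x'" "y = e i \<odot>\<^bsub>M\<^esub> y'" by auto
        then show "x \<oplus>\<^bsub>component_module M (e i)\<^esub> y \<in> (\<lambda>x. e i \<odot>\<^bsub>M\<^esub> x) ` S"
        proof -
          have "x \<oplus>\<^bsub>M\<^esub> y = e i \<odot>\<^bsub>M\<^esub> (x' \<oplus>\<^bsub>M\<^esub> y')"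
            using \<open>x' \<in> S\<close> \<open>y' \<in> S\<close> \<open>x = _\<close> \<open>y = _\<close> SM ei by (simp add: smult_r_distr subsetD)
          moreover have "x' \<oplus>\<^bsub>M\<^esub> y' \<in> S" using \<open>x' \<in> S\<close> \<open>y' \<in> S\<close> S unfolding msub_def by auto
          ultimately show ?thesis by simp
        qed
      next
        fix a x assume a: "a \<in> carrier (component_ring R (e i))" and "x \<in> (\<lambda>x. e i \<odot>\<^bsub>M\<^esub> x) ` S"
        then obtain x' where x': "x' \<in> S" "x = e i \<odot>\<^bsub>M\<^esub> x'" by auto
        have ac: "a \<in> carrier R" using a C by auto
        have "a \<odot>\<^bsub>M\<^esub> x = e i \<odot>\<^bsub>M\<^esub> (a \<odot>\<^bsub>M\<^esub> x')"
          using x' SM ac ei by (auto simp: smult_assoc1[symmetric] m_comm)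
        then show "a \<odot>\<^bsub>component_module M (e i)\<^esub> x \<in> (\<lambda>x. e i \<odot>\<^bsub>M\<^esub> x) ` S"
          using S x' ac unfolding msub_def by auto
      qed
      moreover have "multiplication_module (component_ring R (e i)) (component_module M (e i))" using mm i by auto
      ultimately show ?thesis using mult_module_iff[OF modN] i by blast
    qed
    have ex2: "\<forall>i. \<exists>J. i < n \<longrightarrow> ideal J (component_ring R (e i)) \<and>
        (\<lambda>x. e i \<odot>\<^bsub>M\<^esub> x) ` S = ideal_smult (component_ring R (e i)) J (component_module M (e i))"
      using ex by blast
    from choice[OF ex2] obtain J where J0: "\<forall>i. i < n \<longrightarrow> ideal (J i) (component_ring R (e i)) \<and>
        (\<lambda>x. e i \<odot>\<^bsub>M\<^esub> x) ` S = ideal_smult (component_ring R (e i)) (J i) (component_module M (e i))"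
      by blast
    have J: "ideal (J i) (component_ring R (e i)) \<and>
        (\<lambda>x. e i \<odot>\<^bsub>M\<^esub> x) ` S = ideal_smult (component_ring R (e i)) (J i) (component_module M (e i))"
      if "i < n" for i using J0 that by blast
    define I where "I = {r \<in> carrier R. \<forall>i<n. e i \<otimes> r \<in> J i}"
    have Jc: "J i \<subseteq> {r \<in> carrier R. e i \<otimes> r = r}" if "i < n" for i
      using ideal_sub[OF conjunct1[OF J[OF that]]] comp_carrier[of "e i"] e that by auto
    have I: "ideal I R" unfolding ideal_char
    proof (intro conjI ballI)
      show "I \<subseteq> carrier R" unfolding I_def by auto
      have "e i \<otimes> \<zero> \<in> J i" if "i < n" for i
        using ideal_zero[OF conjunct1[OF J[OF that]]] e that by simp
      then show "\<zero> \<in> I" unfolding I_def by auto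
    next
      fix x y assume "x \<in> I" "y \<in> I"
      then have xy: "x \<in> carrier R" "y \<in> carrier R" "\<forall>i<n. e i \<otimes> x \<in> J i" "\<forall>i<n. e i \<otimes> y \<in> J i"
        unfolding I_def by auto
      have "e i \<otimes> (x \<oplus> y) \<in> J i" if i: "i < n" for i
      proof -
        have "e i \<otimes> (x \<oplus> y) = e i \<otimes> x \<oplus> e i \<otimes> y" using xy e i by (simp add: r_distr)
        then show ?thesis using ideal_add[OF conjunct1[OF J[OF i]], of "e i \<otimes> x" "e i \<otimes> y"] xy i by simp
      qed
      then show "x \<oplus> y \<in> I" unfolding I_def using xy by auto
    next
      fix a x assume a: "a \<in> carrier R" and x: "x \<in> I"
      show "a \<otimes> x \<in> I" unfolding I_def
      proof (intro CollectI conjI allI impI)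
        show "a \<otimes> x \<in> carrier R" using a x I_def by auto
        fix i assume i: "i < n"
        have ei: "e i \<in> carrier R" "e i \<otimes> e i = e i" using e i by auto
        have ea: "e i \<otimes> a \<in> carrier (component_ring R (e i))"
          using comp_carrier[OF ei] a ei by (auto simp: m_assoc[symmetric])
        have xc: "x \<in> carrier R" using x I_def by auto
        have "e i \<otimes> (a \<otimes> x) = (e i \<otimes> a) \<otimes> (e i \<otimes> x)"
        proof -
          have "(e i \<otimes> a) \<otimes> (e i \<otimes> x) = e i \<otimes> (a \<otimes> (e i \<otimes> x))" using ei a xc by (simp add: m_assoc)
          also have "a \<otimes> (e i \<otimes> x) = e i \<otimes> (a \<otimes> x)" using ei a xc by (simp add: m_lcomm)
          also have "e i \<otimes> (e i \<otimes> (a \<otimes> x)) = (e i \<otimes> e i) \<otimes> (a \<otimes> x)" using ei(1) a xc by (simp only: m_assoc m_closed)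
          finally show ?thesis using ei by simp
        qed
        moreover have "e i \<otimes> x \<in> J i" using x i I_def by auto
        ultimately show "e i \<otimes> (a \<otimes> x) \<in> J i"
          using ideal.I_l_closed[of "J i" "component_ring R (e i)" "e i \<otimes> x" "e i \<otimes> a"] J[OF i] ea by simp
      qed
    qed
    have JI: "J i \<subseteq> I" if i: "i < n" for i
    proof
      fix j assume j: "j \<in> J i"
      have jc: "j \<in> carrier R" "e i \<otimes> j = j" using Jc[OF i] j by auto
      have "e k \<otimes> j \<in> J k" if k: "k < n" for k
      proof (cases "k = i")
        case True then show ?thesis using jc j by simp
      next
        case False
        have "e k \<otimes> j = (e k \<otimes> e i) \<otimes> j" using jc e i k by (metis m_assoc)
        also have "\<dots> = \<zero>" using orth False i k jc by simp
        finally show ?thesis using ideal_zero[OF conjunct1[OF J[OF k]]] by simp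
      qed
      then show "j \<in> I" unfolding I_def using jc by auto
    qed
    have sub_i: "ideal_smult (component_ring R (e i)) (J i) (component_module M (e i)) \<subseteq> ideal_smult R I M"
      if i: "i < n" for i
    proof
      fix w assume "w \<in> ideal_smult (component_ring R (e i)) (J i) (component_module M (e i))"
      then show "w \<in> ideal_smult R I M"
      proof induct
        case zero then show ?case using ideal_smult.zero[of M R I] by simp
      next
        case (smult a m)
        have "m \<in> carrier M" using smult(2) e i by auto
        then show ?case using JI[OF i] ideal_smult.smult[of a I m M R] smult(1) by auto
      next
        case (add x y) then show ?case using ideal_smult.add[of x R I M y] by simp
      qed
    qed
    have IMc: "ideal_smult R I M \<subseteq> carrier M" using ideal_smult_subset[OF M ideal_sub[OF I]] .
    show "\<exists>I. ideal I R \<and> S = ideal_smult R I M"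
    proof (intro exI conjI)
      show "ideal I R" by fact
      show "S = ideal_smult R I M"
      proof
        show "S \<subseteq> ideal_smult R I M"
        proof
          fix x assume x: "x \<in> S"
          then have xc: "x \<in> carrier M" using SM by auto
          have "(\<Oplus>\<^bsub>M\<^esub> i \<in> {..<n}. e i \<odot>\<^bsub>M\<^esub> x) \<in> ideal_smult R I M"
          proof (rule finsum_in_set[OF _ _ IMc])
            show "(\<lambda>i. e i \<odot>\<^bsub>M\<^esub> x) \<in> {..<n} \<rightarrow> ideal_smult R I M"
            proof
              fix i assume "i \<in> {..<n}"
              then have i: "i < n" by simp
              have "e i \<odot>\<^bsub>M\<^esub> x \<in> (\<lambda>x. e i \<odot>\<^bsub>M\<^esub> x) ` S" using x by auto
              then show "e i \<odot>\<^bsub>M\<^esub> x \<in> ideal_smult R I M" using conjunct2[OF J[OF i]] sub_i[OF i] by auto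
            qed
          qed (auto intro: ideal_smult.zero ideal_smult.add)
          then show "x \<in> ideal_smult R I M" using decomp_sum[OF M e sum1 xc] by simp
        qed
        show "ideal_smult R I M \<subseteq> S"
        proof
          fix w assume "w \<in> ideal_smult R I M"
          then show "w \<in> S"
          proof induct
            case zero then show ?case using S unfolding msub_def by auto
          next
            case (smult a m)
            have ac: "a \<in> carrier R" using smult I_def by auto
            have "e i \<odot>\<^bsub>M\<^esub> (a \<odot>\<^bsub>M\<^esub> m) \<in> S" if i: "i < n" for i
            proof -
              have ei: "e i \<in> carrier R" "e i \<otimes> e i = e i" using e i by auto
              have "e i \<odot>\<^bsub>M\<^esub> (a \<odot>\<^bsub>M\<^esub> m) = (e i \<otimes> a) \<odot>\<^bsub>M\<^esub> (e i \<odot>\<^bsub>M\<^esub> m)"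
              proof -
                have "(e i \<otimes> a) \<odot>\<^bsub>M\<^esub> (e i \<odot>\<^bsub>M\<^esub> m) = ((e i \<otimes> a) \<otimes> e i) \<odot>\<^bsub>M\<^esub> m"
                  using smult ac ei by (simp add: smult_assoc1)
                also have "(e i \<otimes> a) \<otimes> e i = e i \<otimes> a" using ac ei by (metis m_assoc m_comm)
                also have "(e i \<otimes> a) \<odot>\<^bsub>M\<^esub> m = e i \<odot>\<^bsub>M\<^esub> (a \<odot>\<^bsub>M\<^esub> m)" using smult ac ei by (simp add: smult_assoc1)
                finally show ?thesis by simp
              qed
              moreover have "e i \<otimes> a \<in> J i" using smult i I_def by auto
              moreover have "e i \<odot>\<^bsub>M\<^esub> m \<in> carrier (component_module M (e i))" using smult by auto
              ultimately have "e i \<odot>\<^bsub>M\<^esub> (a \<odot>\<^bsub>M\<^esub> m) \<in> ideal_smult (component_ring R (e i)) (J i) (component_module M (e i))"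
                using ideal_smult.smult[of "e i \<otimes> a" "J i" "e i \<odot>\<^bsub>M\<^esub> m" "component_module M (e i)" "component_ring R (e i)"] by simp
              then have "e i \<odot>\<^bsub>M\<^esub> (a \<odot>\<^bsub>M\<^esub> m) \<in> (\<lambda>x. e i \<odot>\<^bsub>M\<^esub> x) ` S" using J[OF i] by simp
              then obtain x where x: "x \<in> S" "e i \<odot>\<^bsub>M\<^esub> (a \<odot>\<^bsub>M\<^esub> m) = e i \<odot>\<^bsub>M\<^esub> x" by auto
              then show ?thesis using S ei unfolding msub_def by auto
            qed
            then have "(\<Oplus>\<^bsub>M\<^esub> i \<in> {..<n}. e i \<odot>\<^bsub>M\<^esub> (a \<odot>\<^bsub>M\<^esub> m)) \<in> S"
              by (intro finsum_in_set[OF _ _ SM]) (use S in \<open>auto simp: msub_def\<close>)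
            then show ?case using decomp_sum[OF M e sum1, of "a \<odot>\<^bsub>M\<^esub> m"] smult ac by simp
          next
            case (add x y) then show ?case using S unfolding msub_def by auto
          qed
        qed
      qed
    qed
  qed
qed




lemma (in abelian_group) minus_zero_iff:
  "a \<in> carrier G \<Longrightarrow> b \<in> carrier G \<Longrightarrow> a \<oplus> \<ominus> b = \<zero> \<longleftrightarrow> a = b"
proof
  assume ab: "a \<in> carrier G" "b \<in> carrier G" and e: "a \<oplus> \<ominus> b = \<zero>"
  have "a = (a \<oplus> \<ominus> b) \<oplus> b" using ab by (simp add: a_assoc l_neg)
  also have "\<dots> = b" using e ab by simp
  finally show "a = b" .
next
  assume "a \<in> carrier G" "b \<in> carrier G" "a = b" then show "a \<oplus> \<ominus> b = \<zero>" by (simp add: r_neg)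
qed

context module begin

definition annih :: "'c \<Rightarrow> 'a set" where
  "annih x = {d \<in> carrier R. d \<odot>\<^bsub>M\<^esub> x = \<zero>\<^bsub>M\<^esub>}"

lemma annih_ideal: "x \<in> carrier M \<Longrightarrow> ideal (annih x) R"
  unfolding ideal_char annih_def
  by (auto simp: smult_l_distr smult_assoc1)

lemma smult_eq_iff_minus:
  assumes x: "x \<in> carrier M" and d: "d \<in> carrier R" "d' \<in> carrier R"
  shows "d \<odot>\<^bsub>M\<^esub> x = d' \<odot>\<^bsub>M\<^esub> x \<longleftrightarrow> d \<ominus> d' \<in> annih x"
proof -
  have "(d \<ominus> d') \<odot>\<^bsub>M\<^esub> x = d \<odot>\<^bsub>M\<^esub> x \<oplus>\<^bsub>M\<^esub> \<ominus>\<^bsub>M\<^esub> (d' \<odot>\<^bsub>M\<^esub> x)"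
    using assms by (simp add: R.minus_eq smult_l_distr smult_l_minus)
  moreover have "d \<odot>\<^bsub>M\<^esub> x \<oplus>\<^bsub>M\<^esub> \<ominus>\<^bsub>M\<^esub> (d' \<odot>\<^bsub>M\<^esub> x) = \<zero>\<^bsub>M\<^esub> \<longleftrightarrow> d \<odot>\<^bsub>M\<^esub> x = d' \<odot>\<^bsub>M\<^esub> x"
    using assms M.minus_zero_iff by simp
  ultimately show ?thesis unfolding annih_def using assms by auto
qed

lemma cyclic_iso_ring:
  assumes x: "x \<in> carrier M" and gen: "\<forall>y\<in>carrier M. \<exists>d\<in>carrier R. y = d \<odot>\<^bsub>M\<^esub> x"
    and A0: "annih x = {\<zero>}"
  shows "module_isomorphic R M (ideal_module R (carrier R))"
proof -
  have uniq: "d = d'" if "d \<in> carrier R" "d' \<in> carrier R" "d \<odot>\<^bsub>M\<^esub> x = d' \<odot>\<^bsub>M\<^esub> x" for d d'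
  proof -
    have "d \<ominus> d' = \<zero>" using smult_eq_iff_minus[OF x that(1,2)] that(3) A0 by auto
    then show ?thesis using that R.minus_zero_iff by (simp add: R.minus_eq)
  qed
  define f where "f y = (SOME d. d \<in> carrier R \<and> y = d \<odot>\<^bsub>M\<^esub> x)" for y
  have f: "f y \<in> carrier R \<and> y = f y \<odot>\<^bsub>M\<^esub> x" if "y \<in> carrier M" for y
    unfolding f_def using someI_ex[of "\<lambda>d. d \<in> carrier R \<and> y = d \<odot>\<^bsub>M\<^esub> x"] gen that by blast
  have fd: "f (d \<odot>\<^bsub>M\<^esub> x) = d" if "d \<in> carrier R" for d
    using f[of "d \<odot>\<^bsub>M\<^esub> x"] that x uniq by auto
  have "f \<in> module_iso R M (ideal_module R (carrier R))"
    unfolding module_iso_def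
  proof (intro CollectI conjI ballI)
    show "bij_betw f (carrier M) (carrier (ideal_module R (carrier R)))"
      unfolding bij_betw_def inj_on_def
    proof (intro conjI ballI impI)
      fix y y' assume y: "y \<in> carrier M" "y' \<in> carrier M" and eq: "f y = f y'"
      have "y = f y \<odot>\<^bsub>M\<^esub> x" using f[OF y(1)] by simp
      also have "\<dots> = f y' \<odot>\<^bsub>M\<^esub> x" using eq by simp
      also have "\<dots> = y'" using f[OF y(2)] by simp
      finally show "y = y'" .
    next
      show "f ` carrier M = carrier (ideal_module R (carrier R))"
      proof
        show "f ` carrier M \<subseteq> carrier (ideal_module R (carrier R))" using f by (auto simp: ideal_module_def)
        show "carrier (ideal_module R (carrier R)) \<subseteq> f ` carrier M"
        proof
          fix d assume "d \<in> carrier (ideal_module R (carrier R))"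
          then have d: "d \<in> carrier R" by (simp add: ideal_module_def)
          then show "d \<in> f ` carrier M" using fd[OF d] x by (auto intro!: image_eqI[of _ _ "d \<odot>\<^bsub>M\<^esub> x"])
        qed
      qed
    qed
  next
    fix y y' assume y: "y \<in> carrier M" "y' \<in> carrier M"
    have "(f y \<oplus> f y') \<odot>\<^bsub>M\<^esub> x = f y \<odot>\<^bsub>M\<^esub> x \<oplus>\<^bsub>M\<^esub> f y' \<odot>\<^bsub>M\<^esub> x"
      using f[OF y(1)] f[OF y(2)] x by (simp add: smult_l_distr)
    then have "y \<oplus>\<^bsub>M\<^esub> y' = (f y \<oplus> f y') \<odot>\<^bsub>M\<^esub> x" using f[OF y(1)] f[OF y(2)] by simp
    then have "f (y \<oplus>\<^bsub>M\<^esub> y') = f y \<oplus> f y'" using fd f y by auto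
    then show "f (y \<oplus>\<^bsub>M\<^esub> y') = f y \<oplus>\<^bsub>ideal_module R (carrier R)\<^esub> f y'" by (simp add: ideal_module_def)
  next
    fix a y assume a: "a \<in> carrier R" and y: "y \<in> carrier M"
    have "(a \<otimes> f y) \<odot>\<^bsub>M\<^esub> x = a \<odot>\<^bsub>M\<^esub> (f y \<odot>\<^bsub>M\<^esub> x)" using f[OF y] a x by (simp add: smult_assoc1)
    then have "a \<odot>\<^bsub>M\<^esub> y = (a \<otimes> f y) \<odot>\<^bsub>M\<^esub> x" using f[OF y] by simp
    then have "f (a \<odot>\<^bsub>M\<^esub> y) = a \<otimes> f y" using fd f y a by auto
    then show "f (a \<odot>\<^bsub>M\<^esub> y) = a \<odot>\<^bsub>ideal_module R (carrier R)\<^esub> f y" by (simp add: ideal_module_def)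
  qed
  then show ?thesis unfolding module_isomorphic_def by auto
qed

lemma cyclic_iso_quot:
  assumes x: "x \<in> carrier M" and gen: "\<forall>y\<in>carrier M. \<exists>d\<in>carrier R. y = d \<odot>\<^bsub>M\<^esub> x"
  shows "module_isomorphic R M (quotient_module R (annih x))"
proof -
  let ?A = "annih x"
  interpret A: ideal ?A R by (rule annih_ideal[OF x])
  define f where "f y = {d \<in> carrier R. d \<odot>\<^bsub>M\<^esub> x = y}" for y
  have fd: "f (d \<odot>\<^bsub>M\<^esub> x) = ?A +> d" if d: "d \<in> carrier R" for d
  proof -
    have "d' \<in> ?A +> d \<longleftrightarrow> d' \<in> carrier R \<and> d' \<odot>\<^bsub>M\<^esub> x = d \<odot>\<^bsub>M\<^esub> x" for d'
    proof (cases "d' \<in> carrier R")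
      case True then show ?thesis using A.a_rcos_module_minus[OF ring_axioms d True] smult_eq_iff_minus[OF x True d] by auto
    next
      case False then show ?thesis using R.a_r_coset_subset_G[OF A.a_subset d] by auto
    qed
    then show ?thesis unfolding f_def by auto
  qed
  have Qc: "carrier (quotient_module R ?A) = {?A +> d | d. d \<in> carrier R}"
    by (auto simp: quotient_module_def FactRing_def A_RCOSETS_def')
  have "f \<in> module_iso R M (quotient_module R ?A)"
    unfolding module_iso_def
  proof (intro CollectI conjI ballI)
    show "bij_betw f (carrier M) (carrier (quotient_module R ?A))"
      unfolding bij_betw_def inj_on_def
    proof (intro conjI ballI impI)
      fix y y' assume y: "y \<in> carrier M" "y' \<in> carrier M" and e: "f y = f y'"
      obtain d where d: "d \<in> carrier R" "y = d \<odot>\<^bsub>M\<^esub> x" using gen y by auto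
      have "d \<in> f y" unfolding f_def using d by auto
      then have "d \<in> f y'" using e by simp
      then show "y = y'" unfolding f_def using d by auto
    next
      show "f ` carrier M = carrier (quotient_module R ?A)"
      proof
        show "f ` carrier M \<subseteq> carrier (quotient_module R ?A)"
        proof
          fix z assume "z \<in> f ` carrier M"
          then obtain y where y: "y \<in> carrier M" "z = f y" by auto
          obtain d where d: "d \<in> carrier R" "y = d \<odot>\<^bsub>M\<^esub> x" using gen y by auto
          show "z \<in> carrier (quotient_module R ?A)" using fd[OF d(1)] d y Qc by auto
        qed
        show "carrier (quotient_module R ?A) \<subseteq> f ` carrier M"
        proof
          fix z assume "z \<in> carrier (quotient_module R ?A)"
          then obtain d where d: "d \<in> carrier R" "z = ?A +> d" using Qc by auto
          then show "z \<in> f ` carrier M" using fd[OF d(1)] x by (auto intro!: image_eqI[of _ _ "d \<odot>\<^bsub>M\<^esub> x"])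
        qed
      qed
    qed
  next
    fix y y' assume y: "y \<in> carrier M" "y' \<in> carrier M"
    obtain d where d: "d \<in> carrier R" "y = d \<odot>\<^bsub>M\<^esub> x" using gen y by auto
    obtain d' where d': "d' \<in> carrier R" "y' = d' \<odot>\<^bsub>M\<^esub> x" using gen y by auto
    have "y \<oplus>\<^bsub>M\<^esub> y' = (d \<oplus> d') \<odot>\<^bsub>M\<^esub> x" using d d' x by (simp add: smult_l_distr)
    then have "f (y \<oplus>\<^bsub>M\<^esub> y') = ?A +> (d \<oplus> d')" using fd d d' by simp
    also have "\<dots> = (?A +> d) <+> (?A +> d')" using A.a_rcos_sum d d' by simp
    finally show "f (y \<oplus>\<^bsub>M\<^esub> y') = f y \<oplus>\<^bsub>quotient_module R ?A\<^esub> f y'"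
      using fd d d' by (simp add: quotient_module_def FactRing_def)
  next
    fix a y assume a: "a \<in> carrier R" and y: "y \<in> carrier M"
    obtain d where d: "d \<in> carrier R" "y = d \<odot>\<^bsub>M\<^esub> x" using gen y by auto
    have "a \<odot>\<^bsub>M\<^esub> y = (a \<otimes> d) \<odot>\<^bsub>M\<^esub> x" using d a x by (simp add: smult_assoc1)
    then have "f (a \<odot>\<^bsub>M\<^esub> y) = ?A +> (a \<otimes> d)" using fd d a by simp
    also have "\<dots> = [mod ?A:] (?A +> a) \<Otimes> (?A +> d)" using A.rcoset_mult_add a d by simp
    finally show "f (a \<odot>\<^bsub>M\<^esub> y) = a \<odot>\<^bsub>quotient_module R ?A\<^esub> f y"
      using fd d by (simp add: quotient_module_def FactRing_def)
  qed
  then show ?thesis unfolding module_isomorphic_def by auto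
qed

end


context module begin

lemma ideal_smult_msub:
  assumes I: "ideal I R"
  shows "msub R M (ideal_smult R I M)"
  unfolding msub_def
proof (intro conjI ballI)
  show "ideal_smult R I M \<subseteq> carrier M" using ideal_smult_subset[OF module_axioms ideal_sub[OF I]] .
  show "\<zero>\<^bsub>M\<^esub> \<in> ideal_smult R I M" by (rule ideal_smult.zero)
  fix x y assume "x \<in> ideal_smult R I M" "y \<in> ideal_smult R I M"
  then show "x \<oplus>\<^bsub>M\<^esub> y \<in> ideal_smult R I M" by (rule ideal_smult.add)
next
  fix a x assume a: "a \<in> carrier R" and x: "x \<in> ideal_smult R I M"
  from x show "a \<odot>\<^bsub>M\<^esub> x \<in> ideal_smult R I M"
  proof induct
    case zero then show ?case using a by (simp add: ideal_smult.zero)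
  next
    case (smult b m)
    have "a \<odot>\<^bsub>M\<^esub> (b \<odot>\<^bsub>M\<^esub> m) = (a \<otimes> b) \<odot>\<^bsub>M\<^esub> m" using smult a ideal_sub[OF I] by (auto simp: smult_assoc1)
    moreover have "a \<otimes> b \<in> I" using I smult a by (simp add: ideal.I_l_closed)
    ultimately show ?case using smult by (simp add: ideal_smult.smult)
  next
    case (add x y)
    have "x \<in> carrier M" "y \<in> carrier M" using add ideal_smult_subset[OF module_axioms ideal_sub[OF I]] by auto
    then show ?case using add a by (simp add: smult_r_distr ideal_smult.add)
  qed
qed

lemma ideal_smult_mono:
  assumes "I \<subseteq> J"
  shows "ideal_smult R I M \<subseteq> ideal_smult R J M"
proof
  fix x assume "x \<in> ideal_smult R I M" then show "x \<in> ideal_smult R J M"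
    by induct (use assms in \<open>auto intro: ideal_smult.intros\<close>)
qed

lemma cyclic_mult:
  assumes x: "x \<in> carrier M" and gen: "\<forall>y\<in>carrier M. \<exists>d\<in>carrier R. y = d \<odot>\<^bsub>M\<^esub> x"
  shows "multiplication_module R M"
  unfolding mult_module_iff[OF module_axioms]
proof (intro allI impI)
  fix S assume S: "msub R M S"
  define J where "J = {d \<in> carrier R. d \<odot>\<^bsub>M\<^esub> x \<in> S}"
  have J: "ideal J R" unfolding ideal_char J_def
    using S x unfolding msub_def by (auto simp: smult_l_distr smult_assoc1)
  have "S = ideal_smult R J M"
  proof
    show "S \<subseteq> ideal_smult R J M"
    proof
      fix s assume s: "s \<in> S"
      then have "s \<in> carrier M" using S unfolding msub_def by auto
      then obtain d where d: "d \<in> carrier R" "s = d \<odot>\<^bsub>M\<^esub> x" using gen by auto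
      then have "d \<in> J" unfolding J_def using s by auto
      then show "s \<in> ideal_smult R J M" using d x by (simp add: ideal_smult.smult)
    qed
    show "ideal_smult R J M \<subseteq> S"
    proof
      fix w assume "w \<in> ideal_smult R J M" then show "w \<in> S"
      proof induct
        case zero then show ?case using S unfolding msub_def by auto
      next
        case (smult j y)
        obtain d where d: "d \<in> carrier R" "y = d \<odot>\<^bsub>M\<^esub> x" using gen smult by auto
        have jc: "j \<in> carrier R" "j \<odot>\<^bsub>M\<^esub> x \<in> S" using smult J_def by auto
        have "j \<odot>\<^bsub>M\<^esub> y = d \<odot>\<^bsub>M\<^esub> (j \<odot>\<^bsub>M\<^esub> x)"
          using d jc x by (simp add: smult_assoc1[symmetric] R.m_comm)
        then show ?case using S jc d unfolding msub_def by auto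
      next
        case (add a b) then show ?case using S unfolding msub_def by auto
      qed
    qed
  qed
  then show "\<exists>I. ideal I R \<and> S = ideal_smult R I M" using J by auto
qed

end

lemma iso_gen:
  assumes N: "module D N" and f: "f \<in> module_iso D N T"
    and g: "g \<in> carrier T" and genT: "\<forall>t\<in>carrier T. \<exists>d\<in>carrier D. t = d \<odot>\<^bsub>T\<^esub> g"
  shows "\<exists>x\<in>carrier N. \<forall>y\<in>carrier N. \<exists>d\<in>carrier D. y = d \<odot>\<^bsub>N\<^esub> x"
proof -
  interpret module D N by (rule N)
  have bij: "bij_betw f (carrier N) (carrier T)" and lin: "\<forall>a\<in>carrier D. \<forall>x\<in>carrier N. f (a \<odot>\<^bsub>N\<^esub> x) = a \<odot>\<^bsub>T\<^esub> f x"
    using f unfolding module_iso_def by auto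
  have "g \<in> f ` carrier N" using bij g by (simp add: bij_betw_def)
  then obtain x0 where x0: "x0 \<in> carrier N" "f x0 = g" by auto
  have "\<exists>d\<in>carrier D. y = d \<odot>\<^bsub>N\<^esub> x0" if y: "y \<in> carrier N" for y
  proof -
    have "f y \<in> carrier T" using bij y unfolding bij_betw_def by auto
    then obtain d where d: "d \<in> carrier D" "f y = d \<odot>\<^bsub>T\<^esub> g" using genT by auto
    then have "f y = f (d \<odot>\<^bsub>N\<^esub> x0)" using lin x0 by auto
    then have "y = d \<odot>\<^bsub>N\<^esub> x0" using bij y d x0 unfolding bij_betw_def inj_on_def by auto
    then show ?thesis using d by auto
  qed
  then show ?thesis using x0 by auto
qed

lemma gen_ring_module:
  assumes "cring D"
  shows "\<forall>t\<in>carrier (ideal_module D (carrier D)). \<exists>d\<in>carrier D. t = d \<odot>\<^bsub>ideal_module D (carrier D)\<^esub> \<one>\<^bsub>D\<^esub>"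
    "\<one>\<^bsub>D\<^esub> \<in> carrier (ideal_module D (carrier D))"
proof -
  interpret cring D by fact
  show "\<forall>t\<in>carrier (ideal_module D (carrier D)). \<exists>d\<in>carrier D. t = d \<odot>\<^bsub>ideal_module D (carrier D)\<^esub> \<one>\<^bsub>D\<^esub>"
    by (auto simp: ideal_module_def)
  show "\<one>\<^bsub>D\<^esub> \<in> carrier (ideal_module D (carrier D))" by (simp add: ideal_module_def)
qed

lemma gen_quot_module:
  assumes "cring D" "ideal I D"
  shows "\<forall>t\<in>carrier (quotient_module D I). \<exists>d\<in>carrier D. t = d \<odot>\<^bsub>quotient_module D I\<^esub> (I +>\<^bsub>D\<^esub> \<one>\<^bsub>D\<^esub>)"
    "I +>\<^bsub>D\<^esub> \<one>\<^bsub>D\<^esub> \<in> carrier (quotient_module D I)"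
proof -
  interpret cring D by fact
  interpret ideal I D by fact
  show "\<forall>t\<in>carrier (quotient_module D I). \<exists>d\<in>carrier D. t = d \<odot>\<^bsub>quotient_module D I\<^esub> (I +>\<^bsub>D\<^esub> \<one>\<^bsub>D\<^esub>)"
  proof
    fix t assume "t \<in> carrier (quotient_module D I)"
    then obtain d where d: "d \<in> carrier D" "t = I +>\<^bsub>D\<^esub> d"
      by (auto simp: quotient_module_def FactRing_def A_RCOSETS_def')
    then have "d \<odot>\<^bsub>quotient_module D I\<^esub> (I +>\<^bsub>D\<^esub> \<one>\<^bsub>D\<^esub>) = t"
      using rcoset_mult_add[of d "\<one>\<^bsub>D\<^esub>"] by (simp add: quotient_module_def FactRing_def)
    then show "\<exists>d\<in>carrier D. t = d \<odot>\<^bsub>quotient_module D I\<^esub> (I +>\<^bsub>D\<^esub> \<one>\<^bsub>D\<^esub>)" using d by metis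
  qed
  show "I +>\<^bsub>D\<^esub> \<one>\<^bsub>D\<^esub> \<in> carrier (quotient_module D I)"
    by (auto simp: quotient_module_def FactRing_def A_RCOSETS_def')
qed


lemma ideal_target_mult:
  assumes D: "cring D" and mr: "multiplication_ring D" and K: "ideal K D"
    and N: "module D N" and f: "f \<in> module_iso D N (ideal_module D K)"
  shows "multiplication_module D N"
proof -
  interpret module D N by (rule N)
  have Kc: "K \<subseteq> carrier D" by (rule ideal_sub[OF K])
  have bij: "bij_betw f (carrier N) K"
    and add: "\<And>x y. x \<in> carrier N \<Longrightarrow> y \<in> carrier N \<Longrightarrow> f (x \<oplus>\<^bsub>N\<^esub> y) = f x \<oplus>\<^bsub>D\<^esub> f y"
    and lin: "\<And>a x. a \<in> carrier D \<Longrightarrow> x \<in> carrier N \<Longrightarrow> f (a \<odot>\<^bsub>N\<^esub> x) = a \<otimes>\<^bsub>D\<^esub> f x"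
    using f unfolding module_iso_def by (auto simp: ideal_module_def)
  have fK: "f x \<in> K" if "x \<in> carrier N" for x using bij that unfolding bij_betw_def by auto
  have f0: "f \<zero>\<^bsub>N\<^esub> = \<zero>\<^bsub>D\<^esub>"
  proof -
    have "f \<zero>\<^bsub>N\<^esub> = f (\<zero>\<^bsub>D\<^esub> \<odot>\<^bsub>N\<^esub> \<zero>\<^bsub>N\<^esub>)" by simp
    also have "\<dots> = \<zero>\<^bsub>D\<^esub>" using lin[of "\<zero>\<^bsub>D\<^esub>" "\<zero>\<^bsub>N\<^esub>"] fK[of "\<zero>\<^bsub>N\<^esub>"] Kc by auto
    finally show ?thesis .
  qed
  show ?thesis unfolding mult_module_iff[OF N]
  proof (intro allI impI)
    fix S assume S: "msub D N S"
    have SN: "S \<subseteq> carrier N" using S unfolding msub_def by auto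
    let ?L = "f ` S"
    have L: "ideal ?L D" unfolding ideal_char
    proof (intro conjI ballI)
      show "?L \<subseteq> carrier D" using SN fK Kc by auto
      show "\<zero>\<^bsub>D\<^esub> \<in> ?L" using S f0 unfolding msub_def by (auto intro!: image_eqI[of _ _ "\<zero>\<^bsub>N\<^esub>"])
    next
      fix x y assume "x \<in> ?L" "y \<in> ?L"
      then obtain x' y' where xy: "x' \<in> S" "y' \<in> S" "x = f x'" "y = f y'" by auto
      have "x' \<in> carrier N" "y' \<in> carrier N" using xy SN by auto
      then have "x \<oplus>\<^bsub>D\<^esub> y = f (x' \<oplus>\<^bsub>N\<^esub> y')" using add[of x' y'] xy by simp
      moreover have "x' \<oplus>\<^bsub>N\<^esub> y' \<in> S" using S xy unfolding msub_def by auto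
      ultimately show "x \<oplus>\<^bsub>D\<^esub> y \<in> ?L" by auto
    next
      fix a x assume a: "a \<in> carrier D" and "x \<in> ?L"
      then obtain x' where xx: "x' \<in> S" "x = f x'" by auto
      have "x' \<in> carrier N" using xx SN by auto
      then have "a \<otimes>\<^bsub>D\<^esub> x = f (a \<odot>\<^bsub>N\<^esub> x')" using a lin[of a x'] xx by simp
      moreover have "a \<odot>\<^bsub>N\<^esub> x' \<in> S" using S xx a unfolding msub_def by auto
      ultimately show "a \<otimes>\<^bsub>D\<^esub> x \<in> ?L" by auto
    qed
    have "?L \<subseteq> K" using SN fK by auto
    then obtain I' where I': "ideal I' D" "?L = ideal_prod D I' K"
      using mr L K unfolding multiplication_ring_def by blast
    have Ic: "I' \<subseteq> carrier D" by (rule ideal_sub[OF I'(1)])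
    have bk: "\<exists>w\<in>ideal_smult D I' N. f w = z" if "z \<in> ideal_prod D I' K" for z
      using that
    proof induct
      case (prod i j)
      then have "j \<in> f ` carrier N" using bij unfolding bij_betw_def by auto
      then obtain y where y: "y \<in> carrier N" "j = f y" by auto
      then have "f (i \<odot>\<^bsub>N\<^esub> y) = i \<otimes>\<^bsub>D\<^esub> j" using lin prod Ic by auto
      then show ?case using prod y by (auto intro: ideal_smult.smult)
    next
      case (sum s1 s2)
      then obtain w1 w2 where w: "w1 \<in> ideal_smult D I' N" "w2 \<in> ideal_smult D I' N" "f w1 = s1" "f w2 = s2" by auto
      have "w1 \<in> carrier N" "w2 \<in> carrier N" using w ideal_smult_subset[OF N Ic] by auto
      then have "f (w1 \<oplus>\<^bsub>N\<^esub> w2) = s1 \<oplus>\<^bsub>D\<^esub> s2" using add w by auto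
      then show ?case using w by (auto intro: ideal_smult.add)
    qed
    have fwd: "f w \<in> ideal_prod D I' K" if "w \<in> ideal_smult D I' N" for w
      using that
    proof induct
      case zero
      have "\<zero>\<^bsub>D\<^esub> \<otimes>\<^bsub>D\<^esub> \<zero>\<^bsub>D\<^esub> \<in> ideal_prod D I' K" using ideal_zero[OF I'(1)] ideal_zero[OF K] by (rule ideal_prod.prod)
      then show ?case using f0 by simp
    next
      case (smult a m)
      have "a \<in> carrier D" using smult Ic by auto
      then have "f (a \<odot>\<^bsub>N\<^esub> m) = a \<otimes>\<^bsub>D\<^esub> f m" using lin smult by simp
      then show ?case using fK[of m] smult ideal_prod.prod[of a I' "f m" K D] by simp
    next
      case (add x y)
      have "x \<in> carrier N" "y \<in> carrier N" using add ideal_smult_subset[OF N Ic] by auto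
      then have "f (x \<oplus>\<^bsub>N\<^esub> y) = f x \<oplus>\<^bsub>D\<^esub> f y" using \<open>\<And>x y. _ \<Longrightarrow> _ \<Longrightarrow> f (x \<oplus>\<^bsub>N\<^esub> y) = _\<close> by blast
      then show ?case using add ideal_prod.sum[of "f x" D I' K "f y"] by simp
    qed
    have "S = ideal_smult D I' N"
    proof
      show "S \<subseteq> ideal_smult D I' N"
      proof
        fix s assume s: "s \<in> S"
        then have "f s \<in> ideal_prod D I' K" using I'(2) by auto
        then obtain w where w: "w \<in> ideal_smult D I' N" "f w = f s" using bk by blast
        have "w \<in> carrier N" using w ideal_smult_subset[OF N Ic] by auto
        then have "w = s" using w s SN bij unfolding bij_betw_def inj_on_def by auto
        then show "s \<in> ideal_smult D I' N" using w by simp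
      qed
      show "ideal_smult D I' N \<subseteq> S"
      proof
        fix w assume w: "w \<in> ideal_smult D I' N"
        then have "f w \<in> ?L" using fwd I'(2) by auto
        then obtain s where s: "s \<in> S" "f w = f s" by auto
        have "w \<in> carrier N" using w ideal_smult_subset[OF N Ic] by auto
        then have "w = s" using s SN bij unfolding bij_betw_def inj_on_def by auto
        then show "w \<in> S" using s by simp
      qed
    qed
    then show "\<exists>I. ideal I D \<and> S = ideal_smult D I N" using I' by auto
  qed
qed

lemma comp_ideal_is_ideal:
  fixes R (structure)
  assumes R: "cring R" and e: "e \<in> carrier R" "e \<otimes> e = e" and I: "ideal I (component_ring R e)"
  shows "ideal I R"
proof -
  interpret cring R by (rule R)
  have C: "carrier (component_ring R e) = {r \<in> carrier R. e \<otimes> r = r}" using comp_carrier[OF e] .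
  have Ic: "I \<subseteq> carrier (component_ring R e)" by (rule ideal_sub[OF I])
  show ?thesis unfolding ideal_char
  proof (intro conjI ballI)
    show "I \<subseteq> carrier R" using Ic C by auto
    show "\<zero> \<in> I" using ideal_zero[OF I] by simp
  next
    fix x y assume "x \<in> I" "y \<in> I" then show "x \<oplus> y \<in> I" using ideal_add[OF I] by simp
  next
    fix a x assume a: "a \<in> carrier R" and x: "x \<in> I"
    have xc: "x \<in> carrier R" "e \<otimes> x = x" using x Ic C by auto
    have "a \<otimes> x = (e \<otimes> a) \<otimes> x"
    proof -
      have "(e \<otimes> a) \<otimes> x = a \<otimes> (e \<otimes> x)" using a xc e by (simp add: m_assoc m_lcomm)
      then show ?thesis using xc by simp
    qed
    moreover have "e \<otimes> a \<in> carrier (component_ring R e)" using C a e by (simp add: m_assoc[symmetric])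
    ultimately show "a \<otimes> x \<in> I" using ideal_lmult[OF I x] by simp
  qed
qed

lemma comp_mult_ring:
  fixes R (structure)
  assumes R: "cring R" and mr: "multiplication_ring R" and e: "e \<in> carrier R" "e \<otimes> e = e"
  shows "multiplication_ring (component_ring R e)"
  unfolding multiplication_ring_def
proof (intro allI impI)
  interpret cring R by (rule R)
  let ?D = "component_ring R e"
  interpret D: cring ?D by (rule comp_cring[OF e])
  have C: "carrier ?D = {r \<in> carrier R. e \<otimes> r = r}" using comp_carrier[OF e] .
  fix I J assume I: "ideal I ?D" and J: "ideal J ?D" and JI: "J \<subseteq> I"
  have IR: "ideal I R" and JR: "ideal J R" using comp_ideal_is_ideal[OF R e] I J by auto
  obtain I' where I': "ideal I' R" "J = I' \<cdot> I" using mr IR JR JI unfolding multiplication_ring_def by blast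
  interpret I': ideal I' R by (rule I'(1))
  define I'' where "I'' = (\<lambda>a. e \<otimes> a) ` I'"
  have I'': "ideal I'' ?D" unfolding D.ideal_char
  proof (intro conjI ballI)
    show "I'' \<subseteq> carrier ?D" unfolding I''_def using C e by (auto simp: m_assoc[symmetric])
    show "\<zero>\<^bsub>?D\<^esub> \<in> I''" unfolding I''_def using e by (auto intro!: image_eqI[of _ _ "\<zero>"])
    fix x y assume "x \<in> I''" "y \<in> I''"
    then show "x \<oplus>\<^bsub>?D\<^esub> y \<in> I''" unfolding I''_def using e by (auto simp: r_distr[symmetric])
  next
    fix a x assume a: "a \<in> carrier ?D" and x: "x \<in> I''"
    then obtain b where b: "b \<in> I'" "x = e \<otimes> b" unfolding I''_def by auto
    have ac: "a \<in> carrier R" using a C by auto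
    have bc: "b \<in> carrier R" using b(1) I'.Icarr by auto
    have "a \<otimes>\<^bsub>?D\<^esub> x = a \<otimes> (e \<otimes> b)" using b by simp
    also have "\<dots> = e \<otimes> (a \<otimes> b)" using ac bc e by (simp add: m_lcomm)
    finally show "a \<otimes>\<^bsub>?D\<^esub> x \<in> I''" unfolding I''_def using ac b by (auto intro: I'.I_l_closed)
  qed
  have Ic: "I \<subseteq> {r \<in> carrier R. e \<otimes> r = r}" using ideal_sub[OF I] C by auto
  have "I' \<cdot> I = ideal_prod ?D I'' I"
  proof
    show "I' \<cdot> I \<subseteq> ideal_prod ?D I'' I"
    proof
      fix z assume "z \<in> I' \<cdot> I" then show "z \<in> ideal_prod ?D I'' I"
      proof induct
        case (prod i j)
        have ic: "i \<in> carrier R" using prod I'.Icarr by auto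
        have jc: "j \<in> carrier R" "e \<otimes> j = j" using prod Ic by auto
        have "i \<otimes> j = (e \<otimes> i) \<otimes> j"
        proof -
          have "(e \<otimes> i) \<otimes> j = i \<otimes> (e \<otimes> j)" using ic jc(1) e(1) by (simp add: m_assoc m_lcomm)
          then show ?thesis using jc by simp
        qed
        moreover have "e \<otimes> i \<in> I''" unfolding I''_def using prod by auto
        ultimately show ?case using ideal_prod.prod[of "e \<otimes> i" I'' j I ?D] prod by simp
      next
        case (sum s1 s2) then show ?case using ideal_prod.sum[of s1 ?D I'' I s2] by simp
      qed
    qed
    show "ideal_prod ?D I'' I \<subseteq> I' \<cdot> I"
    proof
      fix z assume "z \<in> ideal_prod ?D I'' I" then show "z \<in> I' \<cdot> I"
      proof induct
        case (prod i j)
        then obtain b where b: "b \<in> I'" "i = e \<otimes> b" unfolding I''_def by auto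
        have bc: "b \<in> carrier R" using b I'.Icarr by auto
        have jc: "j \<in> carrier R" "e \<otimes> j = j" using prod Ic by auto
        have "i \<otimes>\<^bsub>?D\<^esub> j = b \<otimes> j"
        proof -
          have "(e \<otimes> b) \<otimes> j = b \<otimes> (e \<otimes> j)" using bc jc(1) e(1) by (simp add: m_assoc m_lcomm)
          then show ?thesis using jc b by simp
        qed
        then show ?case using ideal_prod.prod[of b I' j I R] b prod by simp
      next
        case (sum s1 s2) then show ?case using ideal_prod.sum[of s1 R I' I s2] by simp
      qed
    qed
  qed
  then show "\<exists>I'. ideal I' ?D \<and> J = ideal_prod ?D I' I" using I' I'' by auto
qed




context cring begin

lemma fold_ideal:
  "\<forall>P\<in>set Ps. ideal P R \<Longrightarrow> ideal (foldr (ideal_prod R) Ps (carrier R)) R"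
  by (induct Ps) (auto intro: ideal_prod_is_ideal oneideal)

lemma fold_sub:
  "\<forall>P\<in>set Ps. ideal P R \<Longrightarrow> Q \<in> set Ps \<Longrightarrow> foldr (ideal_prod R) Ps (carrier R) \<subseteq> Q"
proof (induct Ps)
  case Nil then show ?case by simp
next
  case (Cons P Ps)
  have I1: "ideal P R" and I2: "ideal (foldr (ideal_prod R) Ps (carrier R)) R"
    using Cons fold_ideal by auto
  have "foldr (ideal_prod R) (P # Ps) (carrier R) \<subseteq> P \<inter> foldr (ideal_prod R) Ps (carrier R)"
    using ideal_prod_inter[OF I1 I2] by simp
  then show ?case using Cons by auto
qed

lemma prime_fold:
  assumes "\<forall>P\<in>set Ps. ideal P R" "primeideal Q R" "foldr (ideal_prod R) Ps (carrier R) \<subseteq> Q"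
  shows "\<exists>P\<in>set Ps. P \<subseteq> Q"
  using assms
proof (induct Ps)
  case Nil then show ?case using primeideal.I_notcarr[OF Nil(2)] ideal_sub[OF primeideal.axioms(1)[OF Nil(2)]] by auto
next
  case (Cons P Ps)
  have I1: "ideal P R" and I2: "ideal (foldr (ideal_prod R) Ps (carrier R)) R"
    using Cons fold_ideal by auto
  have "P \<subseteq> Q \<or> foldr (ideal_prod R) Ps (carrier R) \<subseteq> Q"
    using primeideal_divides_ideal_prod[OF Cons(3) I1 I2] Cons(4) by simp
  then show ?case using Cons by auto
qed

lemma ideal_prod_mono1:
  assumes "I \<subseteq> I'"
  shows "I \<cdot> J \<subseteq> I' \<cdot> J"
proof
  fix x assume "x \<in> I \<cdot> J" then show "x \<in> I' \<cdot> J"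
    by induct (use assms in \<open>auto intro: ideal_prod.intros\<close>)
qed

lemma PIdl_prod:
  assumes a: "a \<in> carrier R" and Y: "ideal Y R" and z: "z \<in> (PIdl a) \<cdot> Y"
  shows "\<exists>y\<in>Y. z = a \<otimes> y"
  using z
proof induct
  case (prod i j)
  then obtain x where x: "x \<in> carrier R" "i = x \<otimes> a" unfolding cgenideal_def by auto
  have jc: "j \<in> carrier R" using prod ideal_sub[OF Y] by auto
  have "i \<otimes> j = a \<otimes> (x \<otimes> j)" using x a jc by (simp add: m_comm m_lcomm)
  moreover have "x \<otimes> j \<in> Y" using ideal_lmult[OF Y prod(2) x(1)] by simp
  ultimately show ?case by auto
next
  case (sum s1 s2)
  then obtain y1 y2 where y: "y1 \<in> Y" "y2 \<in> Y" "s1 = a \<otimes> y1" "s2 = a \<otimes> y2" by auto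
  have "y1 \<in> carrier R" "y2 \<in> carrier R" using y ideal_sub[OF Y] by auto
  then have "s1 \<oplus> s2 = a \<otimes> (y1 \<oplus> y2)" using y(3,4) a by (simp add: r_distr)
  then show ?case using ideal_add[OF Y y(1,2)] by auto
qed

end

context domain begin

lemma canc1:
  assumes mr: "multiplication_ring R" and Xi: "ideal Xi R" "Xi \<noteq> {\<zero>}" and Y: "ideal Y R"
    and eq: "Xi \<cdot> Y = Xi"
  shows "Y = carrier R"
proof -
  obtain a where a: "a \<in> Xi" "a \<noteq> \<zero>" using Xi ideal_zero[OF Xi(1)] by auto
  have ac: "a \<in> carrier R" using a ideal_sub[OF Xi(1)] by auto
  have Pa: "ideal (PIdl a) R" by (rule cgenideal_ideal[OF ac])
  have "PIdl a \<subseteq> Xi" by (rule cgenideal_minimal[OF Xi(1) a(1)])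
  then obtain Xi' where Xi': "ideal Xi' R" "PIdl a = Xi' \<cdot> Xi" using mr Pa Xi(1) unfolding multiplication_ring_def by blast
  have "PIdl a = Xi' \<cdot> (Xi \<cdot> Y)" using Xi' eq by simp
  also have "\<dots> = (Xi' \<cdot> Xi) \<cdot> Y" using ideal_prod_assoc[OF Xi'(1) Xi(1) Y] by simp
  finally have "PIdl a = (PIdl a) \<cdot> Y" using Xi' by simp
  then have "a \<in> (PIdl a) \<cdot> Y" using cgenideal_self[OF ac] by simp
  then obtain y where y: "y \<in> Y" "a = a \<otimes> y" using PIdl_prod[OF ac Y] by auto
  have yc: "y \<in> carrier R" using y ideal_sub[OF Y] by auto
  have "a \<otimes> \<one> = a \<otimes> y" using y ac by simp
  then have "y = \<one>" using m_lcancel[OF a(2) ac one_closed yc] by simp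
  then show ?thesis using y ideal.one_imp_carrier[OF Y] by simp
qed

lemma prime_maximal:
  assumes mr: "multiplication_ring R" and P: "primeideal P R" "P \<noteq> {\<zero>}"
  shows "maximalideal P R"
proof -
  have PI: "ideal P R" using P primeideal.axioms(1) by auto
  show ?thesis
  proof (rule maximalidealI[OF PI])
    show "carrier R \<noteq> P" using primeideal.I_notcarr[OF P(1)] .
  next
    fix J assume J: "ideal J R" "P \<subseteq> J" "J \<subseteq> carrier R"
    show "J = P \<or> J = carrier R"
    proof (cases "J = P")
      case True then show ?thesis by simp
    next
      case False
      obtain I' where I': "ideal I' R" "P = I' \<cdot> J" using mr J PI unfolding multiplication_ring_def by blast
      have "I' \<subseteq> P \<or> J \<subseteq> P" using primeideal_divides_ideal_prod[OF P(1) I'(1) J(1)] I' by simp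
      then have "I' \<subseteq> P" using False J by auto
      then have "P \<subseteq> P \<cdot> J" using I' ideal_prod_mono1 by auto
      moreover have "P \<cdot> J \<subseteq> P" using ideal_prod_inter[OF PI J(1)] by auto
      ultimately have "P \<cdot> J = P" by auto
      then show ?thesis using canc1[OF mr PI P(2) J(1)] by simp
    qed
  qed
qed

end


context module begin

lemma cyclic_msub:
  assumes m: "m \<in> carrier M"
  shows "msub R M {d \<odot>\<^bsub>M\<^esub> m | d. d \<in> carrier R}"
  unfolding msub_def
proof (intro conjI ballI)
  show "{d \<odot>\<^bsub>M\<^esub> m | d. d \<in> carrier R} \<subseteq> carrier M" using m by auto
  show "\<zero>\<^bsub>M\<^esub> \<in> {d \<odot>\<^bsub>M\<^esub> m | d. d \<in> carrier R}" using m by (auto intro!: exI[of _ \<zero>])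
next
  fix x y assume "x \<in> {d \<odot>\<^bsub>M\<^esub> m | d. d \<in> carrier R}" "y \<in> {d \<odot>\<^bsub>M\<^esub> m | d. d \<in> carrier R}"
  then obtain d d' where "d \<in> carrier R" "d' \<in> carrier R" "x = d \<odot>\<^bsub>M\<^esub> m" "y = d' \<odot>\<^bsub>M\<^esub> m" by auto
  then show "x \<oplus>\<^bsub>M\<^esub> y \<in> {d \<odot>\<^bsub>M\<^esub> m | d. d \<in> carrier R}" using m
    by (auto simp: smult_l_distr[symmetric] intro!: exI[of _ "d \<oplus> d'"])
next
  fix a x assume "a \<in> carrier R" "x \<in> {d \<odot>\<^bsub>M\<^esub> m | d. d \<in> carrier R}"
  then obtain d where "d \<in> carrier R" "x = d \<odot>\<^bsub>M\<^esub> m" by auto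
  then show "a \<odot>\<^bsub>M\<^esub> x \<in> {d \<odot>\<^bsub>M\<^esub> m | d. d \<in> carrier R}" using m \<open>a \<in> carrier R\<close>
    by (auto simp: smult_assoc1[symmetric] intro!: exI[of _ "a \<otimes> d"])
qed

lemma cyclic_eq_ideal_smult:
  assumes mm: "multiplication_module R M" and m: "m \<in> carrier M"
  shows "\<exists>I. ideal I R \<and> {d \<odot>\<^bsub>M\<^esub> m | d. d \<in> carrier R} = ideal_smult R I M"
  using mm cyclic_msub[OF m] unfolding mult_module_iff[OF module_axioms] by blast

lemma ideal_smult_zero_ideal:
  assumes "I \<subseteq> {\<zero>}" "w \<in> ideal_smult R I M"
  shows "w = \<zero>\<^bsub>M\<^esub>"
  using assms(2) by induct (use assms(1) in auto)

lemma torsionfree_iso: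
  assumes mm: "multiplication_module R M"
    and tf: "\<forall>t\<in>carrier M. \<forall>a\<in>carrier R. a \<odot>\<^bsub>M\<^esub> t = \<zero>\<^bsub>M\<^esub> \<longrightarrow> a = \<zero> \<or> t = \<zero>\<^bsub>M\<^esub>"
    and m: "m \<in> carrier M" "m \<noteq> \<zero>\<^bsub>M\<^esub>"
  shows "\<exists>K. ideal K R \<and> K \<noteq> {\<zero>} \<and> module_isomorphic R M (ideal_module R K)"
proof -
  obtain I where I: "ideal I R" "{d \<odot>\<^bsub>M\<^esub> m | d. d \<in> carrier R} = ideal_smult R I M"
    using cyclic_eq_ideal_smult[OF mm m(1)] by auto
  have "m \<in> ideal_smult R I M" using I(2)[symmetric] m(1) by (auto intro!: exI[of _ \<one>])
  then have "\<not> I \<subseteq> {\<zero>}" using ideal_smult_zero_ideal m(2) by auto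
  then obtain a where a: "a \<in> I" "a \<noteq> \<zero>" by auto
  have ac: "a \<in> carrier R" using a ideal_sub[OF I(1)] by auto
  have ex: "\<exists>d. d \<in> carrier R \<and> a \<odot>\<^bsub>M\<^esub> y = d \<odot>\<^bsub>M\<^esub> m" if y: "y \<in> carrier M" for y
  proof -
    have "a \<odot>\<^bsub>M\<^esub> y \<in> ideal_smult R I M" using a(1) y by (rule ideal_smult.smult)
    then show ?thesis using I(2) by auto
  qed
  have ann: "annih m = {\<zero>}" unfolding annih_def using tf m by auto
  have uniq: "d = d'" if "d \<in> carrier R" "d' \<in> carrier R" "d \<odot>\<^bsub>M\<^esub> m = d' \<odot>\<^bsub>M\<^esub> m" for d d'
  proof -
    have "d \<ominus> d' = \<zero>" using smult_eq_iff_minus[OF m(1) that(1,2)] that(3) ann by auto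
    then show ?thesis using that R.minus_zero_iff by (simp add: R.minus_eq)
  qed
  have ainj: "y = y'" if "y \<in> carrier M" "y' \<in> carrier M" "a \<odot>\<^bsub>M\<^esub> y = a \<odot>\<^bsub>M\<^esub> y'" for y y'
  proof -
    have "a \<odot>\<^bsub>M\<^esub> (y \<oplus>\<^bsub>M\<^esub> \<ominus>\<^bsub>M\<^esub> y') = \<zero>\<^bsub>M\<^esub>"
      using that ac by (simp add: smult_r_distr smult_r_minus M.minus_zero_iff)
    then have "y \<oplus>\<^bsub>M\<^esub> \<ominus>\<^bsub>M\<^esub> y' = \<zero>\<^bsub>M\<^esub>" using tf a(2) ac that by auto
    then show ?thesis using that M.minus_zero_iff by simp
  qed
  define f where "f y = (SOME d. d \<in> carrier R \<and> a \<odot>\<^bsub>M\<^esub> y = d \<odot>\<^bsub>M\<^esub> m)" for y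
  have f: "f y \<in> carrier R \<and> a \<odot>\<^bsub>M\<^esub> y = f y \<odot>\<^bsub>M\<^esub> m" if "y \<in> carrier M" for y
    unfolding f_def using someI_ex[OF ex[OF that]] .
  have fu: "f y = d" if "y \<in> carrier M" "d \<in> carrier R" "a \<odot>\<^bsub>M\<^esub> y = d \<odot>\<^bsub>M\<^esub> m" for y d
    using uniq f[OF that(1)] that by metis
  have fadd: "f (y \<oplus>\<^bsub>M\<^esub> y') = f y \<oplus> f y'" if y: "y \<in> carrier M" "y' \<in> carrier M" for y y'
  proof (rule fu)
    show "y \<oplus>\<^bsub>M\<^esub> y' \<in> carrier M" using y by simp
    show "f y \<oplus> f y' \<in> carrier R" using f y by simp
    have "a \<odot>\<^bsub>M\<^esub> (y \<oplus>\<^bsub>M\<^esub> y') = a \<odot>\<^bsub>M\<^esub> y \<oplus>\<^bsub>M\<^esub> a \<odot>\<^bsub>M\<^esub> y'" using ac y by (simp add: smult_r_distr)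
    also have "\<dots> = f y \<odot>\<^bsub>M\<^esub> m \<oplus>\<^bsub>M\<^esub> f y' \<odot>\<^bsub>M\<^esub> m" using f y by simp
    also have "\<dots> = (f y \<oplus> f y') \<odot>\<^bsub>M\<^esub> m" using f y m by (simp add: smult_l_distr)
    finally show "a \<odot>\<^bsub>M\<^esub> (y \<oplus>\<^bsub>M\<^esub> y') = (f y \<oplus> f y') \<odot>\<^bsub>M\<^esub> m" .
  qed
  have fsm: "f (r \<odot>\<^bsub>M\<^esub> y) = r \<otimes> f y" if r: "r \<in> carrier R" and y: "y \<in> carrier M" for r y
  proof (rule fu)
    show "r \<odot>\<^bsub>M\<^esub> y \<in> carrier M" using r y by simp
    show "r \<otimes> f y \<in> carrier R" using f r y by simp
    have "a \<odot>\<^bsub>M\<^esub> (r \<odot>\<^bsub>M\<^esub> y) = r \<odot>\<^bsub>M\<^esub> (a \<odot>\<^bsub>M\<^esub> y)" using ac r y by (simp add: smult_assoc1[symmetric] R.m_comm)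
    also have "\<dots> = r \<odot>\<^bsub>M\<^esub> (f y \<odot>\<^bsub>M\<^esub> m)" using f y by simp
    also have "\<dots> = (r \<otimes> f y) \<odot>\<^bsub>M\<^esub> m" using f y r m by (simp add: smult_assoc1)
    finally show "a \<odot>\<^bsub>M\<^esub> (r \<odot>\<^bsub>M\<^esub> y) = (r \<otimes> f y) \<odot>\<^bsub>M\<^esub> m" .
  qed
  have f0: "f \<zero>\<^bsub>M\<^esub> = \<zero>" by (rule fu) (use ac m in auto)
  have fm: "f m = a" by (rule fu) (use ac m in auto)
  have finj: "inj_on f (carrier M)"
  proof (rule inj_onI)
    fix y y' assume y: "y \<in> carrier M" "y' \<in> carrier M" "f y = f y'"
    then have "a \<odot>\<^bsub>M\<^esub> y = a \<odot>\<^bsub>M\<^esub> y'" using f[OF y(1)] f[OF y(2)] by simp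
    then show "y = y'" using ainj y by auto
  qed
  let ?K = "f ` carrier M"
  have K: "ideal ?K R" unfolding ideal_char
  proof (intro conjI ballI)
    show "?K \<subseteq> carrier R" using f by auto
    show "\<zero> \<in> ?K" using f0 by (auto intro!: image_eqI[of _ _ "\<zero>\<^bsub>M\<^esub>"])
  next
    fix x y assume "x \<in> ?K" "y \<in> ?K"
    then obtain x' y' where "x' \<in> carrier M" "y' \<in> carrier M" "x = f x'" "y = f y'" by auto
    then show "x \<oplus> y \<in> ?K" using fadd by (auto intro!: image_eqI[of _ _ "x' \<oplus>\<^bsub>M\<^esub> y'"])
  next
    fix r x assume "r \<in> carrier R" "x \<in> ?K"
    then obtain x' where "x' \<in> carrier M" "x = f x'" by auto
    then show "r \<otimes> x \<in> ?K" using fsm \<open>r \<in> carrier R\<close> by (auto intro!: image_eqI[of _ _ "r \<odot>\<^bsub>M\<^esub> x'"])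
  qed
  have Kn0: "?K \<noteq> {\<zero>}" using fm m a(2) by auto
  have "f \<in> module_iso R M (ideal_module R ?K)"
    unfolding module_iso_def using finj fadd fsm by (auto simp: bij_betw_def ideal_module_def)
  then show ?thesis using K Kn0 unfolding module_isomorphic_def by blast
qed

end


context module begin

lemma torsion_cyclic:
  assumes dd: "dedekind_domain R" and mr: "multiplication_ring R" and mm: "multiplication_module R M"
    and t: "t \<in> carrier M" "t \<noteq> \<zero>\<^bsub>M\<^esub>" and a: "a \<in> carrier R" "a \<noteq> \<zero>" "a \<odot>\<^bsub>M\<^esub> t = \<zero>\<^bsub>M\<^esub>"
  shows "\<exists>x\<in>carrier M. \<forall>y\<in>carrier M. \<exists>d\<in>carrier R. y = d \<odot>\<^bsub>M\<^esub> x"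
proof -
  interpret D: domain R using dd unfolding dedekind_domain_def by auto
  have fact: "\<And>I. ideal I R \<Longrightarrow> I \<noteq> {\<zero>} \<Longrightarrow> I \<noteq> carrier R \<Longrightarrow>
      \<exists>Ps. Ps \<noteq> [] \<and> (\<forall>P\<in>set Ps. primeideal P R) \<and> I = foldr (ideal_prod R) Ps (carrier R)"
    using dd unfolding dedekind_domain_def by blast
  define A where "A = {r \<in> carrier R. \<forall>y\<in>carrier M. r \<odot>\<^bsub>M\<^esub> y = \<zero>\<^bsub>M\<^esub>}"
  have AI: "ideal A R" unfolding ideal_char A_def
    by (auto simp: smult_l_distr smult_assoc1)
  obtain J where J: "ideal J R" "{d \<odot>\<^bsub>M\<^esub> t | d. d \<in> carrier R} = ideal_smult R J M"
    using cyclic_eq_ideal_smult[OF mm t(1)] by auto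
  have "t \<in> ideal_smult R J M" using J(2)[symmetric] t(1) by (auto intro!: exI[of _ \<one>])
  then have "\<not> J \<subseteq> {\<zero>}" using ideal_smult_zero_ideal t(2) by auto
  then obtain j where j: "j \<in> J" "j \<noteq> \<zero>" by auto
  have jc: "j \<in> carrier R" using j ideal_sub[OF J(1)] by auto
  define b where "b = a \<otimes> j"
  have bc: "b \<in> carrier R" "b \<noteq> \<zero>" unfolding b_def using a jc j D.integral by auto
  have bA: "b \<in> A" unfolding A_def
  proof (intro CollectI conjI ballI)
    show "b \<in> carrier R" by (rule bc(1))
    fix y assume y: "y \<in> carrier M"
    have "j \<odot>\<^bsub>M\<^esub> y \<in> ideal_smult R J M" using j(1) y by (rule ideal_smult.smult)
    then obtain d where d: "d \<in> carrier R" "j \<odot>\<^bsub>M\<^esub> y = d \<odot>\<^bsub>M\<^esub> t" using J(2) by auto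
    have "b \<odot>\<^bsub>M\<^esub> y = a \<odot>\<^bsub>M\<^esub> (d \<odot>\<^bsub>M\<^esub> t)" unfolding b_def using a jc y d by (simp add: smult_assoc1)
    also have "\<dots> = d \<odot>\<^bsub>M\<^esub> (a \<odot>\<^bsub>M\<^esub> t)" using a(1) d(1) t(1) by (simp add: smult_assoc1[symmetric] R.m_comm)
    also have "\<dots> = \<zero>\<^bsub>M\<^esub>" using a d by simp
    finally show "b \<odot>\<^bsub>M\<^esub> y = \<zero>\<^bsub>M\<^esub>" .
  qed
  show ?thesis
  proof (cases "A = carrier R")
    case True
    then have "\<one> \<in> A" by simp
    then have "y = \<zero> \<odot>\<^bsub>M\<^esub> \<zero>\<^bsub>M\<^esub>" if "y \<in> carrier M" for y using that unfolding A_def by auto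
    then show ?thesis by blast
  next
    case Aprop: False
    have An0: "A \<noteq> {\<zero>}" using bA bc by auto
    obtain Ps where Ps: "Ps \<noteq> []" "\<forall>P\<in>set Ps. primeideal P R" "A = foldr (ideal_prod R) Ps (carrier R)"
      using fact[OF AI An0 Aprop] by blast
    have PI: "\<forall>P\<in>set Ps. ideal P R" using Ps(2) primeideal.axioms(1) by blast
    have AP: "A \<subseteq> P" if "P \<in> set Ps" for P using fold_sub[OF PI that] Ps(3) by simp
    have maxP: "maximalideal P R" if P: "P \<in> set Ps" for P
    proof (rule D.prime_maximal[OF mr])
      show "primeideal P R" using Ps(2) P by auto
      show "P \<noteq> {\<zero>}" using AP[OF P] bA bc by auto
    qed
    have Pprop: "P \<noteq> carrier R" if "P \<in> set Ps" for P using Ps(2) that primeideal.I_notcarr by metis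
    have PM: "msub R M (ideal_smult R P M)" if "P \<in> set Ps" for P using ideal_smult_msub PI that by auto
    have notall: "\<exists>z\<in>carrier M. z \<notin> ideal_smult R P M" if P: "P \<in> set Ps" for P
    proof (rule ccontr)
      assume "\<not> ?thesis"
      then have all: "carrier M \<subseteq> ideal_smult R P M" by auto
      have PIi: "ideal P R" using PI P by auto
      obtain A2 where A2: "ideal A2 R" "A = A2 \<cdot> P" using mr AI PIi AP[OF P] unfolding multiplication_ring_def by blast
      have "A2 \<subseteq> A"
      proof
        fix r assume r: "r \<in> A2"
        have rc: "r \<in> carrier R" using r ideal_sub[OF A2(1)] by auto
        have kill: "r \<odot>\<^bsub>M\<^esub> w = \<zero>\<^bsub>M\<^esub>" if "w \<in> ideal_smult R P M" for w
          using that
        proof induct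
          case zero then show ?case using rc by simp
        next
          case (smult p m)
          have pc: "p \<in> carrier R" using smult ideal_sub[OF PIi] by auto
          have "r \<otimes> p \<in> A" using A2(2) ideal_prod.prod[OF r smult(1), of R] by simp
          then have "(r \<otimes> p) \<odot>\<^bsub>M\<^esub> m = \<zero>\<^bsub>M\<^esub>" using smult unfolding A_def by auto
          then show ?case using rc pc smult by (simp add: smult_assoc1)
        next
          case (add x y)
          have "x \<in> carrier M" "y \<in> carrier M" using add ideal_smult_subset[OF module_axioms ideal_sub[OF PIi]] by auto
          then show ?case using add rc by (simp add: smult_r_distr)
        qed
        show "r \<in> A" unfolding A_def using rc kill all by auto
      qed
      moreover have "A2 \<cdot> P \<subseteq> A2" using ideal_prod_inter[OF A2(1) PIi] by auto
      ultimately have eq: "A2 \<cdot> P = A2" using A2 by auto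
      have "A2 \<noteq> {\<zero>}"
      proof
        assume "A2 = {\<zero>}"
        then have "A \<subseteq> {\<zero>}" using A2 ideal_prod_inter[OF A2(1) PIi] by auto
        then show False using bA bc by auto
      qed
      then have "P = carrier R" using D.canc1[OF mr A2(1) _ PIi eq] by simp
      then show False using Pprop[OF P] by simp
    qed
    have avoid: "set L \<subseteq> set Ps \<Longrightarrow> \<exists>x\<in>carrier M. \<forall>P\<in>set L. x \<notin> ideal_smult R P M" for L
    proof (induct L)
      case Nil then show ?case by auto
    next
      case (Cons Q L)
      then obtain x where x: "x \<in> carrier M" "\<forall>P\<in>set L. x \<notin> ideal_smult R P M" by auto
      have Q: "Q \<in> set Ps" using Cons by auto
      show ?case
      proof (cases "x \<in> ideal_smult R Q M")
        case False then show ?thesis using x by auto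
      next
        case xQ: True
        have LI: "\<forall>P\<in>set L. ideal P R" using Cons PI by auto
        have QI: "ideal Q R" using PI Q by auto
        have Qprime: "primeideal Q R" using Ps(2) Q by auto
        let ?Pi = "foldr (ideal_prod R) L (carrier R)"
        have "\<not> ?Pi \<subseteq> Q"
        proof
          assume "?Pi \<subseteq> Q"
          then obtain P where P: "P \<in> set L" "P \<subseteq> Q" using prime_fold[OF LI Qprime] by auto
          have "Q = P \<or> Q = carrier R"
            using maximalideal.I_maximal[OF maxP[of P] QI P(2) ideal_sub[OF QI]] P Cons by auto
          then have "Q = P" using Pprop[OF Q] by auto
          then show False using x P xQ by auto
        qed
        then obtain u where u: "u \<in> ?Pi" "u \<notin> Q" by auto
        have uc: "u \<in> carrier R" using u ideal_sub[OF fold_ideal[OF LI]] by auto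
        obtain z where z: "z \<in> carrier M" "z \<notin> ideal_smult R Q M" using notall[OF Q] by auto
        define x' where "x' = x \<oplus>\<^bsub>M\<^esub> u \<odot>\<^bsub>M\<^esub> z"
        have uz: "u \<odot>\<^bsub>M\<^esub> z \<in> carrier M" using uc z by simp
        have x'c: "x' \<in> carrier M" unfolding x'_def using x uz by simp
        have back1: "x = x' \<oplus>\<^bsub>M\<^esub> \<ominus>\<^bsub>M\<^esub> (u \<odot>\<^bsub>M\<^esub> z)"
          unfolding x'_def using x uz by (simp add: M.a_assoc M.r_neg)
        have back2: "u \<odot>\<^bsub>M\<^esub> z = x' \<oplus>\<^bsub>M\<^esub> \<ominus>\<^bsub>M\<^esub> x"
          unfolding x'_def using x uz by (simp add: M.a_assoc M.r_neg M.a_comm[of x])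
        have negc: "\<ominus>\<^bsub>M\<^esub> w \<in> ideal_smult R P M" if "P \<in> set Ps" "w \<in> ideal_smult R P M" for P w
        proof -
          have "w \<in> carrier M" using PM[OF that(1)] that(2) unfolding msub_def by auto
          then have "\<ominus>\<^bsub>M\<^esub> w = (\<ominus> \<one>) \<odot>\<^bsub>M\<^esub> w" by (simp add: smult_l_minus)
          then show ?thesis using PM[OF that(1)] that(2) unfolding msub_def by auto
        qed
        have "x' \<notin> ideal_smult R P M" if P: "P \<in> set L" for P
        proof
          assume x'P: "x' \<in> ideal_smult R P M"
          have PP: "P \<in> set Ps" using P Cons by auto
          have "u \<in> P" using fold_sub[OF LI P] u by auto
          then have "u \<odot>\<^bsub>M\<^esub> z \<in> ideal_smult R P M" using z by (simp add: ideal_smult.smult)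
          then have "x' \<oplus>\<^bsub>M\<^esub> \<ominus>\<^bsub>M\<^esub> (u \<odot>\<^bsub>M\<^esub> z) \<in> ideal_smult R P M"
            using negc[OF PP] x'P PM[OF PP] unfolding msub_def by auto
          then show False using back1 x P by auto
        qed
        moreover have "x' \<notin> ideal_smult R Q M"
        proof
          assume x'Q: "x' \<in> ideal_smult R Q M"
          have uzQ: "u \<odot>\<^bsub>M\<^esub> z \<in> ideal_smult R Q M"
            using back2 negc[OF Q xQ] x'Q PM[OF Q] unfolding msub_def by auto
          have SI: "ideal (Q <+>\<^bsub>R\<^esub> PIdl u) R" using R.add_ideals[OF QI R.cgenideal_ideal[OF uc]] .
          have "Q \<subseteq> Q <+>\<^bsub>R\<^esub> PIdl u"
          proof
            fix q assume q: "q \<in> Q"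
            have "q \<oplus> \<zero> \<in> Q <+>\<^bsub>R\<^esub> PIdl u" unfolding set_add_def'
              using q ideal_zero[OF R.cgenideal_ideal[OF uc]] by auto
            then show "q \<in> Q <+>\<^bsub>R\<^esub> PIdl u" using q ideal_sub[OF QI] by auto
          qed
          moreover have "u \<in> Q <+>\<^bsub>R\<^esub> PIdl u"
          proof -
            have "\<zero> \<oplus> u \<in> Q <+>\<^bsub>R\<^esub> PIdl u" unfolding set_add_def'
              using ideal_zero[OF QI] R.cgenideal_self[OF uc] by auto
            then show ?thesis using uc by simp
          qed
          ultimately have "Q <+>\<^bsub>R\<^esub> PIdl u = Q \<or> Q <+>\<^bsub>R\<^esub> PIdl u = carrier R"
            using maximalideal.I_maximal[OF maxP[OF Q] SI] ideal_sub[OF SI] by auto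
          then have "Q <+>\<^bsub>R\<^esub> PIdl u = carrier R" using u \<open>u \<in> Q <+>\<^bsub>R\<^esub> PIdl u\<close> by auto
          then have "\<one> \<in> Q <+>\<^bsub>R\<^esub> PIdl u" by simp
          then obtain q s where qs: "q \<in> Q" "s \<in> carrier R" "\<one> = q \<oplus> s \<otimes> u"
            unfolding set_add_def' cgenideal_def by auto
          have qc: "q \<in> carrier R" using qs ideal_sub[OF QI] by auto
          have "z = \<one> \<odot>\<^bsub>M\<^esub> z" using z by simp
          also have "\<dots> = q \<odot>\<^bsub>M\<^esub> z \<oplus>\<^bsub>M\<^esub> s \<odot>\<^bsub>M\<^esub> (u \<odot>\<^bsub>M\<^esub> z)"
            using qs qc uc z by (simp add: smult_l_distr smult_assoc1)
          finally have "z = q \<odot>\<^bsub>M\<^esub> z \<oplus>\<^bsub>M\<^esub> s \<odot>\<^bsub>M\<^esub> (u \<odot>\<^bsub>M\<^esub> z)" .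
          moreover have "q \<odot>\<^bsub>M\<^esub> z \<in> ideal_smult R Q M" using qs z by (simp add: ideal_smult.smult)
          moreover have "s \<odot>\<^bsub>M\<^esub> (u \<odot>\<^bsub>M\<^esub> z) \<in> ideal_smult R Q M" using PM[OF Q] uzQ qs unfolding msub_def by auto
          ultimately have "z \<in> ideal_smult R Q M" using PM[OF Q] unfolding msub_def by metis
          then show False using z by simp
        qed
        ultimately show ?thesis using x'c by auto
      qed
    qed
    obtain x where x: "x \<in> carrier M" "\<forall>P\<in>set Ps. x \<notin> ideal_smult R P M" using avoid[of Ps] by auto
    obtain I where I: "ideal I R" "{d \<odot>\<^bsub>M\<^esub> x | d. d \<in> carrier R} = ideal_smult R I M"
      using cyclic_eq_ideal_smult[OF mm x(1)] by auto
    have xI: "x \<in> ideal_smult R I M" using I(2)[symmetric] x(1) by (auto intro!: exI[of _ \<one>])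
    have notI: "\<not> I \<subseteq> P" if "P \<in> set Ps" for P
      using ideal_smult_mono[of I P] xI x that by auto
    let ?C = "I <+>\<^bsub>R\<^esub> A"
    have CI: "ideal ?C R" by (rule R.add_ideals[OF I(1) AI])
    have IC: "I \<subseteq> ?C"
    proof
      fix i assume i: "i \<in> I"
      have "i \<oplus> \<zero> \<in> ?C" unfolding set_add_def' using i ideal_zero[OF AI] by auto
      then show "i \<in> ?C" using i ideal_sub[OF I(1)] by auto
    qed
    have AC: "A \<subseteq> ?C"
    proof
      fix i assume i: "i \<in> A"
      have "\<zero> \<oplus> i \<in> ?C" unfolding set_add_def' using i ideal_zero[OF I(1)] by auto
      then show "i \<in> ?C" using i ideal_sub[OF AI] by auto
    qed
    have "?C = carrier R"
    proof (rule ccontr)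
      assume Cprop: "?C \<noteq> carrier R"
      have "?C \<noteq> {\<zero>}" using AC bA bc by auto
      then obtain Qs where Qs: "Qs \<noteq> []" "\<forall>P\<in>set Qs. primeideal P R" "?C = foldr (ideal_prod R) Qs (carrier R)"
        using fact[OF CI _ Cprop] by blast
      have QsI: "\<forall>P\<in>set Qs. ideal P R" using Qs(2) primeideal.axioms(1) by blast
      have hdQ: "hd Qs \<in> set Qs" using Qs(1) by simp
      have CQ: "?C \<subseteq> hd Qs" using fold_sub[OF QsI hdQ] Qs(3) by simp
      have Qp: "primeideal (hd Qs) R" using Qs(2) hdQ by auto
      have "foldr (ideal_prod R) Ps (carrier R) \<subseteq> hd Qs" using AC CQ Ps(3) by auto
      then obtain P where P: "P \<in> set Ps" "P \<subseteq> hd Qs" using prime_fold[OF PI Qp] by auto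
      have QI: "ideal (hd Qs) R" using QsI hdQ by auto
      have "hd Qs = P \<or> hd Qs = carrier R"
        using maximalideal.I_maximal[OF maxP[OF P(1)] QI P(2) ideal_sub[OF QI]] .
      then have "hd Qs = P" using primeideal.I_notcarr[OF Qp] by auto
      then show False using notI[OF P(1)] IC CQ by auto
    qed
    then have "\<one> \<in> ?C" by simp
    then obtain i r where ir: "i \<in> I" "r \<in> A" "\<one> = i \<oplus> r" unfolding set_add_def' by auto
    have ic: "i \<in> carrier R" "r \<in> carrier R" using ir ideal_sub[OF I(1)] ideal_sub[OF AI] by auto
    have "\<exists>d\<in>carrier R. y = d \<odot>\<^bsub>M\<^esub> x" if y: "y \<in> carrier M" for y
    proof -
      have "y = \<one> \<odot>\<^bsub>M\<^esub> y" using y by simp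
      also have "\<dots> = i \<odot>\<^bsub>M\<^esub> y \<oplus>\<^bsub>M\<^esub> r \<odot>\<^bsub>M\<^esub> y" using ir ic y by (simp add: smult_l_distr)
      also have "\<dots> = i \<odot>\<^bsub>M\<^esub> y" using ir y ic unfolding A_def by simp
      finally have "y = i \<odot>\<^bsub>M\<^esub> y" .
      moreover have "i \<odot>\<^bsub>M\<^esub> y \<in> ideal_smult R I M" using ir(1) y by (rule ideal_smult.smult)
      ultimately show ?thesis using I(2) by auto
    qed
    then show ?thesis using x by blast
  qed
qed

end


context module begin

lemma cyclic_disj:
  assumes x: "x \<in> carrier M" and gen: "\<forall>y\<in>carrier M. \<exists>d\<in>carrier R. y = d \<odot>\<^bsub>M\<^esub> x"
  shows "module_isomorphic R M (ideal_module R (carrier R)) \<or>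
    (\<exists>I. ideal I R \<and> I \<noteq> {\<zero>} \<and> module_isomorphic R M (quotient_module R I))"
proof (cases "annih x = {\<zero>}")
  case True then show ?thesis using cyclic_iso_ring[OF x gen] by simp
next
  case False then show ?thesis using cyclic_iso_quot[OF x gen] annih_ideal[OF x] by blast
qed

lemma dedekind_class:
  assumes dd: "dedekind_domain R" and mr: "multiplication_ring R" and mm: "multiplication_module R M"
  shows "module_isomorphic R M (ideal_module R (carrier R)) \<or>
    (\<exists>I. ideal I R \<and> I \<noteq> {\<zero>} \<and> module_isomorphic R M (quotient_module R I)) \<or>
    (\<exists>I. ideal I R \<and> I \<noteq> {\<zero>} \<and> module_isomorphic R M (ideal_module R I))"
proof (cases "\<exists>t\<in>carrier M. \<exists>a\<in>carrier R. t \<noteq> \<zero>\<^bsub>M\<^esub> \<and> a \<noteq> \<zero> \<and> a \<odot>\<^bsub>M\<^esub> t = \<zero>\<^bsub>M\<^esub>")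
  case True
  then obtain t a where "t \<in> carrier M" "a \<in> carrier R" "t \<noteq> \<zero>\<^bsub>M\<^esub>" "a \<noteq> \<zero>" "a \<odot>\<^bsub>M\<^esub> t = \<zero>\<^bsub>M\<^esub>" by auto
  then obtain x where "x \<in> carrier M" "\<forall>y\<in>carrier M. \<exists>d\<in>carrier R. y = d \<odot>\<^bsub>M\<^esub> x"
    using torsion_cyclic[OF dd mr mm] by blast
  then show ?thesis using cyclic_disj by blast
next
  case False
  then have tf: "\<forall>t\<in>carrier M. \<forall>a\<in>carrier R. a \<odot>\<^bsub>M\<^esub> t = \<zero>\<^bsub>M\<^esub> \<longrightarrow> a = \<zero> \<or> t = \<zero>\<^bsub>M\<^esub>" by blast
  show ?thesis
  proof (cases "\<exists>m\<in>carrier M. m \<noteq> \<zero>\<^bsub>M\<^esub>")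
    case True
    then obtain m where "m \<in> carrier M" "m \<noteq> \<zero>\<^bsub>M\<^esub>" by auto
    then show ?thesis using torsionfree_iso[OF mm tf] by blast
  next
    case False
    then have "\<forall>y\<in>carrier M. y = \<zero> \<odot>\<^bsub>M\<^esub> \<zero>\<^bsub>M\<^esub>" by auto
    then have "\<forall>y\<in>carrier M. \<exists>d\<in>carrier R. y = d \<odot>\<^bsub>M\<^esub> \<zero>\<^bsub>M\<^esub>" by blast
    then show ?thesis using cyclic_disj[OF M.zero_closed] by blast
  qed
qed

end

lemma (in cring) PIR_max_exists:
  assumes pir: "\<forall>I. ideal I R \<longrightarrow> principalideal I R" and J: "ideal J R" "J \<noteq> carrier R"
  shows "\<exists>m. maximalideal m R \<and> J \<subseteq> m"
proof (rule ccontr)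
  assume nomax: "\<not> ?thesis"
  have step: "\<exists>K'. ideal K' R \<and> K \<subset> K' \<and> K' \<noteq> carrier R"
    if K: "ideal K R" "J \<subseteq> K" "K \<noteq> carrier R" for K
  proof (rule ccontr)
    assume nostr: "\<not> ?thesis"
    have "maximalideal K R"
    proof (rule maximalidealI[OF K(1)])
      show "carrier R \<noteq> K" using K(3) by auto
    next
      fix J' assume J': "ideal J' R" "K \<subseteq> J'" "J' \<subseteq> carrier R"
      show "J' = K \<or> J' = carrier R"
      proof (rule ccontr)
        assume "\<not> (J' = K \<or> J' = carrier R)"
        then have "K \<subset> J'" "J' \<noteq> carrier R" using J'(2) by auto
        then show False using nostr J'(1) by blast
      qed
    qed
    then show False using nomax K by auto
  qed
  define f where "f = rec_nat J (\<lambda>n K. SOME K'. ideal K' R \<and> K \<subset> K' \<and> K' \<noteq> carrier R)"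
  have f0: "f 0 = J" unfolding f_def by simp
  have fS: "f (Suc n) = (SOME K'. ideal K' R \<and> f n \<subset> K' \<and> K' \<noteq> carrier R)" for n unfolding f_def by simp
  have inv: "ideal (f n) R \<and> J \<subseteq> f n \<and> f n \<noteq> carrier R" for n
  proof (induct n)
    case 0 then show ?case using J f0 by simp
  next
    case (Suc n)
    have "ideal (f (Suc n)) R \<and> f n \<subset> f (Suc n) \<and> f (Suc n) \<noteq> carrier R"
      unfolding fS by (rule someI_ex[OF step]) (use Suc in auto)
    then show ?case using Suc by auto
  qed
  have strict: "f n \<subset> f (Suc n)" for n
  proof -
    have "ideal (f (Suc n)) R \<and> f n \<subset> f (Suc n) \<and> f (Suc n) \<noteq> carrier R"
      unfolding fS by (rule someI_ex[OF step]) (use inv in auto)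
    then show ?thesis by auto
  qed
  have mono: "f i \<subseteq> f j" if "i \<le> j" for i j
    using lift_Suc_mono_le[of f, OF _ that] strict by auto
  let ?U = "\<Union>n. f n"
  have U: "ideal ?U R" unfolding ideal_char
  proof (intro conjI ballI)
    show "?U \<subseteq> carrier R"
    proof
      fix x assume "x \<in> ?U"
      then obtain n where "x \<in> f n" by auto
      then show "x \<in> carrier R" using ideal_sub[OF conjunct1[OF inv[of n]]] by auto
    qed
    show "\<zero> \<in> ?U" using ideal_zero[OF conjunct1[OF inv[of 0]]] by auto
  next
    fix x y assume "x \<in> ?U" "y \<in> ?U"
    then obtain i j where "x \<in> f i" "y \<in> f j" by auto
    then have "x \<in> f (max i j)" "y \<in> f (max i j)" using mono[of i "max i j"] mono[of j "max i j"] by auto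
    then show "x \<oplus> y \<in> ?U" using ideal_add[of "f (max i j)" R x y] inv by auto
  next
    fix a x assume "a \<in> carrier R" "x \<in> ?U"
    then obtain i where "x \<in> f i" by auto
    then show "a \<otimes> x \<in> ?U" using ideal_lmult[of "f i" R x a] inv \<open>a \<in> carrier R\<close> by auto
  qed
  have "principalideal ?U R" using pir U by blast
  from principalideal.generate[OF this] obtain g where g: "g \<in> carrier R" "?U = Idl {g}" by blast
  have "g \<in> ?U" using g genideal_self'[OF g(1)] by simp
  then obtain k where k: "g \<in> f k" by auto
  have "?U \<subseteq> f k" using g(2) genideal_minimal[of "f k" "{g}"] inv k by auto
  then have "f (Suc k) \<subseteq> f k" by auto
  then show False using strict[of k] by auto
qed




context module begin

lemma pi_div:
  assumes pc: "p \<in> carrier R" and w: "w \<in> ideal_smult R (PIdl p) M"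
  shows "\<exists>y\<in>carrier M. w = p \<odot>\<^bsub>M\<^esub> y"
  using w
proof induct
  case zero then show ?case using pc by (auto intro!: bexI[of _ "\<zero>\<^bsub>M\<^esub>"])
next
  case (smult i m)
  then obtain c where c: "c \<in> carrier R" "i = c \<otimes> p" unfolding cgenideal_def by auto
  have "i \<odot>\<^bsub>M\<^esub> m = p \<odot>\<^bsub>M\<^esub> (c \<odot>\<^bsub>M\<^esub> m)" using c pc smult by (simp add: smult_assoc1[symmetric] R.m_comm)
  then show ?case using c smult by auto
next
  case (add x y)
  then obtain y1 y2 where y: "y1 \<in> carrier M" "y2 \<in> carrier M" "x = p \<odot>\<^bsub>M\<^esub> y1" "y = p \<odot>\<^bsub>M\<^esub> y2" by auto
  then have "x \<oplus>\<^bsub>M\<^esub> y = p \<odot>\<^bsub>M\<^esub> (y1 \<oplus>\<^bsub>M\<^esub> y2)" using pc by (simp add: smult_r_distr)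
  then show ?case using y by auto
qed

lemma local_cyclic:
  assumes art: "artinian_local_PIR R" and mm: "multiplication_module R M"
  shows "\<exists>x\<in>carrier M. \<forall>y\<in>carrier M. \<exists>d\<in>carrier R. y = d \<odot>\<^bsub>M\<^esub> x"
proof -
  have nochain: "\<not> (\<exists>f :: nat \<Rightarrow> 'a set. \<forall>k. ideal (f k) R \<and> f (Suc k) \<subset> f k)"
    and lo: "\<exists>!m. maximalideal m R" and pir: "\<forall>I. ideal I R \<longrightarrow> principalideal I R"
    using art unfolding artinian_local_PIR_def artinian_ring_def local_ring_def principal_ideal_ring_def by auto
  obtain m where m: "maximalideal m R" and muniq: "\<And>m'. maximalideal m' R \<Longrightarrow> m' = m" using lo by auto
  have mI: "ideal m R" using m maximalideal.axioms(1) by auto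
  have mprop: "m \<noteq> carrier R" using maximalideal.I_notcarr[OF m] by auto
  have L1: "J \<subseteq> m" if "ideal J R" "J \<noteq> carrier R" for J
    using R.PIR_max_exists[OF pir that] muniq by blast
  have "principalideal m R" using pir mI by auto
  from principalideal.generate[OF this] obtain \<pi> where pi: "\<pi> \<in> carrier R" "m = Idl {\<pi>}" by blast
  have mP: "m = PIdl \<pi>" using pi R.cgenideal_eq_genideal by simp
  have pim: "\<pi> \<in> m" using mP R.cgenideal_self[OF pi(1)] by simp
  \<comment> \<open>nilpotency\<close>
  have "\<exists>k::nat. \<pi> [^]\<^bsub>R\<^esub> k \<in> PIdl (\<pi> [^]\<^bsub>R\<^esub> Suc k)"
  proof (rule ccontr)
    assume nk: "\<not> ?thesis"
    have "\<forall>k::nat. ideal (PIdl (\<pi> [^]\<^bsub>R\<^esub> k)) R \<and> PIdl (\<pi> [^]\<^bsub>R\<^esub> Suc k) \<subset> PIdl (\<pi> [^]\<^bsub>R\<^esub> k)"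
    proof
      fix k :: nat
      have pk: "\<pi> [^]\<^bsub>R\<^esub> k \<in> carrier R" by (rule R.nat_pow_closed[OF pi(1)])
      have sub: "PIdl (\<pi> [^]\<^bsub>R\<^esub> Suc k) \<subseteq> PIdl (\<pi> [^]\<^bsub>R\<^esub> k)"
      proof
        fix z assume "z \<in> PIdl (\<pi> [^]\<^bsub>R\<^esub> Suc k)"
        then obtain y where y: "y \<in> carrier R" "z = y \<otimes> (\<pi> [^]\<^bsub>R\<^esub> Suc k)" unfolding cgenideal_def by auto
        have e1: "\<pi> [^]\<^bsub>R\<^esub> Suc k = \<pi> [^]\<^bsub>R\<^esub> k \<otimes> \<pi>" by simp
        have "z = y \<otimes> (\<pi> [^]\<^bsub>R\<^esub> k \<otimes> \<pi>)" using y(2) e1 by simp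
        also have "\<dots> = (y \<otimes> \<pi>) \<otimes> \<pi> [^]\<^bsub>R\<^esub> k" using y(1) pi(1) pk by (simp add: R.m_ac)
        finally have zz: "z = (y \<otimes> \<pi>) \<otimes> \<pi> [^]\<^bsub>R\<^esub> k" .
        have "y \<otimes> \<pi> \<in> carrier R" using y(1) pi(1) by simp
        then show "z \<in> PIdl (\<pi> [^]\<^bsub>R\<^esub> k)" unfolding cgenideal_def using zz by blast
      qed
      have in1: "\<pi> [^]\<^bsub>R\<^esub> k \<in> PIdl (\<pi> [^]\<^bsub>R\<^esub> k)" using R.cgenideal_self[OF pk] .
      have in2: "\<pi> [^]\<^bsub>R\<^esub> k \<notin> PIdl (\<pi> [^]\<^bsub>R\<^esub> Suc k)" using nk by blast
      have "PIdl (\<pi> [^]\<^bsub>R\<^esub> Suc k) \<subset> PIdl (\<pi> [^]\<^bsub>R\<^esub> k)"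
        unfolding psubset_eq using sub in1 in2 by blast
      then show "ideal (PIdl (\<pi> [^]\<^bsub>R\<^esub> k)) R \<and> PIdl (\<pi> [^]\<^bsub>R\<^esub> Suc k) \<subset> PIdl (\<pi> [^]\<^bsub>R\<^esub> k)"
        using R.cgenideal_ideal[OF pk] by simp
    qed
    then have "\<exists>f :: nat \<Rightarrow> 'a set. \<forall>k. ideal (f k) R \<and> f (Suc k) \<subset> f k"
      by (rule exI[of _ "\<lambda>k. PIdl (\<pi> [^]\<^bsub>R\<^esub> k)"])
    then show False using nochain by simp
  qed
  then obtain k where "\<pi> [^]\<^bsub>R\<^esub> k \<in> PIdl (\<pi> [^]\<^bsub>R\<^esub> Suc k)" by auto
  then obtain d where d: "d \<in> carrier R" "\<pi> [^]\<^bsub>R\<^esub> k = d \<otimes> (\<pi> [^]\<^bsub>R\<^esub> Suc k)" unfolding cgenideal_def by auto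
  define p where "p = \<pi> [^]\<^bsub>R\<^esub> k"
  have pc: "p \<in> carrier R" unfolding p_def by (rule R.nat_pow_closed[OF pi(1)])
  have ps: "\<pi> [^]\<^bsub>R\<^esub> Suc k = p \<otimes> \<pi>" unfolding p_def by simp
  have pd: "p = d \<otimes> (p \<otimes> \<pi>)" using d(2) unfolding p_def[symmetric] ps .
  define w where "w = \<one> \<ominus> d \<otimes> \<pi>"
  have wc: "w \<in> carrier R" unfolding w_def using d pi by simp
  have pw: "p \<otimes> w = \<zero>"
  proof -
    have "p \<otimes> w = p \<ominus> d \<otimes> (p \<otimes> \<pi>)" unfolding w_def using pc d(1) pi(1) by (simp add: R.minus_eq R.r_distr R.r_minus R.m_lcomm)
    also have "\<dots> = \<zero>" using pd pc by (simp add: R.minus_eq R.r_neg)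
    finally show ?thesis .
  qed
  have "PIdl w = carrier R"
  proof (rule ccontr)
    assume "PIdl w \<noteq> carrier R"
    then have "PIdl w \<subseteq> m" using L1 R.cgenideal_ideal[OF wc] by auto
    then have wm: "w \<in> m" using R.cgenideal_self[OF wc] by auto
    have "d \<otimes> \<pi> \<in> m" using ideal_lmult[OF mI pim d(1)] .
    then have "w \<oplus> d \<otimes> \<pi> \<in> m" using ideal_add[OF mI wm] by simp
    moreover have "w \<oplus> d \<otimes> \<pi> = \<one>" unfolding w_def using d(1) pi(1) by (simp add: R.minus_eq R.a_assoc R.l_neg)
    ultimately have "\<one> \<in> m" by simp
    then show False using ideal.one_imp_carrier[OF mI] mprop by simp
  qed
  then have "\<one> \<in> PIdl w" by simp
  then obtain s where s: "s \<in> carrier R" "\<one> = s \<otimes> w" unfolding cgenideal_def by auto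
  have pk0: "\<pi> [^]\<^bsub>R\<^esub> k = \<zero>"
  proof -
    have "p = p \<otimes> (s \<otimes> w)" using s pc by (metis R.r_one)
    also have "\<dots> = s \<otimes> (p \<otimes> w)" using s pc wc by (simp add: R.m_lcomm)
    also have "\<dots> = \<zero>" using pw s by simp
    finally show ?thesis unfolding p_def .
  qed
  show ?thesis
  proof (cases "\<exists>x\<in>carrier M. x \<notin> ideal_smult R m M")
    case True
    then obtain x where x: "x \<in> carrier M" "x \<notin> ideal_smult R m M" by auto
    obtain I where I: "ideal I R" "{d \<odot>\<^bsub>M\<^esub> x | d. d \<in> carrier R} = ideal_smult R I M"
      using cyclic_eq_ideal_smult[OF mm x(1)] by auto
    have xI: "x \<in> ideal_smult R I M" using I(2)[symmetric] x(1) by (auto intro!: exI[of _ \<one>])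
    have "I = carrier R"
    proof (rule ccontr)
      assume "I \<noteq> carrier R"
      then have "I \<subseteq> m" using L1 I(1) by auto
      then show False using ideal_smult_mono[of I m] xI x by auto
    qed
    then have "\<exists>d\<in>carrier R. y = d \<odot>\<^bsub>M\<^esub> x" if y: "y \<in> carrier M" for y
    proof -
      have "\<one> \<odot>\<^bsub>M\<^esub> y \<in> ideal_smult R I M" using ideal_smult.smult[of \<one> I y M R] y \<open>I = carrier R\<close> by simp
      then show ?thesis using I(2) y by auto
    qed
    then show ?thesis using x by blast
  next
    case False
    then have all: "y \<in> ideal_smult R (PIdl \<pi>) M" if "y \<in> carrier M" for y using that mP by auto
    have pow: "\<exists>y'\<in>carrier M. y = (\<pi> [^]\<^bsub>R\<^esub> (n::nat)) \<odot>\<^bsub>M\<^esub> y'" if "y \<in> carrier M" for n y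
      using that
    proof (induct n arbitrary: y)
      case 0 then show ?case by auto
    next
      case (Suc n)
      then obtain y' where y': "y' \<in> carrier M" "y = (\<pi> [^]\<^bsub>R\<^esub> n) \<odot>\<^bsub>M\<^esub> y'" by auto
      obtain y'' where y'': "y'' \<in> carrier M" "y' = \<pi> \<odot>\<^bsub>M\<^esub> y''" using pi_div[OF pi(1) all[OF y'(1)]] by auto
      have "y = (\<pi> [^]\<^bsub>R\<^esub> Suc n) \<odot>\<^bsub>M\<^esub> y''" using y' y'' pi by (simp add: smult_assoc1)
      then show ?case using y'' by auto
    qed
    have "y = \<zero> \<odot>\<^bsub>M\<^esub> \<zero>\<^bsub>M\<^esub>" if "y \<in> carrier M" for y
      using pow[OF that, of k] pk0 by auto
    then show ?thesis by blast
  qed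
qed

end


theorem theorem1p2:
  fixes R :: "('a, 'b) ring_scheme" and M :: "('a, 'c, 'd) module_scheme"
    and n :: nat and e :: "nat \<Rightarrow> 'a"
  assumes "cring R"
    and "multiplication_ring R"
    and "finite (minimal_primes R)"
    and "\<forall>i<n. e i \<in> carrier R \<and> e i \<otimes>\<^bsub>R\<^esub> e i = e i"
    and "\<forall>i<n. \<forall>j<n. i \<noteq> j \<longrightarrow> e i \<otimes>\<^bsub>R\<^esub> e j = \<zero>\<^bsub>R\<^esub>"
    and "finsum R e {..<n} = \<one>\<^bsub>R\<^esub>"
    and "\<forall>i<n. dedekind_domain (component_ring R (e i)) \<or>
                artinian_local_PIR (component_ring R (e i))"
    and "module R M"
  shows "multiplication_module R M \<longleftrightarrow>
    (\<forall>i<n.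
       module_isomorphic (component_ring R (e i)) (component_module M (e i))
          (ideal_module (component_ring R (e i)) (carrier (component_ring R (e i))))
     \<or> (\<exists>I. ideal I (component_ring R (e i)) \<and> I \<noteq> {\<zero>\<^bsub>R\<^esub>} \<and>
          module_isomorphic (component_ring R (e i)) (component_module M (e i))
            (quotient_module (component_ring R (e i)) I))
     \<or> (dedekind_domain (component_ring R (e i)) \<and>
        (\<exists>I. ideal I (component_ring R (e i)) \<and> I \<noteq> {\<zero>\<^bsub>R\<^esub>} \<and>
          module_isomorphic (component_ring R (e i)) (component_module M (e i))
            (ideal_module (component_ring R (e i)) I))))"
proof -
  note R = assms(1) and mr = assms(2) and e = assms(4) and orth = assms(5) and sum1 = assms(6)
    and cases = assms(7) and M = assms(8)
  have ei: "e i \<in> carrier R" "e i \<otimes>\<^bsub>R\<^esub> e i = e i" if "i < n" for i using e that by auto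
  show ?thesis
  proof (intro iffI allI impI)
      fix i assume mm: "multiplication_module R M" and i: "i < n"
      let ?D = "component_ring R (e i)" and ?N = "component_module M (e i)"
      have modN: "module ?D ?N" by (rule comp_module[OF M ei[OF i]])
      have mmN: "multiplication_module ?D ?N" by (rule mult_comp[OF M ei[OF i] mm])
      have z: "\<zero>\<^bsub>?D\<^esub> = \<zero>\<^bsub>R\<^esub>" by simp
      show "module_isomorphic ?D ?N (ideal_module ?D (carrier ?D))
     \<or> (\<exists>I. ideal I ?D \<and> I \<noteq> {\<zero>\<^bsub>R\<^esub>} \<and> module_isomorphic ?D ?N (quotient_module ?D I))
     \<or> (dedekind_domain ?D \<and> (\<exists>I. ideal I ?D \<and> I \<noteq> {\<zero>\<^bsub>R\<^esub>} \<and> module_isomorphic ?D ?N (ideal_module ?D I)))"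
      proof (cases "dedekind_domain ?D")
        case True
        have mrD: "multiplication_ring ?D" by (rule comp_mult_ring[OF R mr ei[OF i]])
        show ?thesis using module.dedekind_class[OF modN True mrD mmN, unfolded z] True by blast
      next
        case False
        then have art: "artinian_local_PIR ?D" using cases i by auto
        obtain x where x: "x \<in> carrier ?N" "\<forall>y\<in>carrier ?N. \<exists>d\<in>carrier ?D. y = d \<odot>\<^bsub>?N\<^esub> x"
          using module.local_cyclic[OF modN art mmN] by blast
        show ?thesis using module.cyclic_disj[OF modN x, unfolded z] by blast
      qed
  next
    assume H: "\<forall>i<n.
       module_isomorphic (component_ring R (e i)) (component_module M (e i))
          (ideal_module (component_ring R (e i)) (carrier (component_ring R (e i))))
     \<or> (\<exists>I. ideal I (component_ring R (e i)) \<and> I \<noteq> {\<zero>\<^bsub>R\<^esub>} \<and>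
          module_isomorphic (component_ring R (e i)) (component_module M (e i))
            (quotient_module (component_ring R (e i)) I))
     \<or> (dedekind_domain (component_ring R (e i)) \<and>
        (\<exists>I. ideal I (component_ring R (e i)) \<and> I \<noteq> {\<zero>\<^bsub>R\<^esub>} \<and>
          module_isomorphic (component_ring R (e i)) (component_module M (e i))
            (ideal_module (component_ring R (e i)) I)))"
    have "multiplication_module (component_ring R (e i)) (component_module M (e i))" if i: "i < n" for i
    proof -
      let ?D = "component_ring R (e i)" and ?N = "component_module M (e i)"
      have modN: "module ?D ?N" by (rule comp_module[OF M ei[OF i]])
      have cD: "cring ?D" by (rule cring.comp_cring[OF R ei[OF i]])
      have Hi: "module_isomorphic ?D ?N (ideal_module ?D (carrier ?D))
     \<or> (\<exists>I. ideal I ?D \<and> I \<noteq> {\<zero>\<^bsub>R\<^esub>} \<and> module_isomorphic ?D ?N (quotient_module ?D I))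
     \<or> (dedekind_domain ?D \<and> (\<exists>I. ideal I ?D \<and> I \<noteq> {\<zero>\<^bsub>R\<^esub>} \<and> module_isomorphic ?D ?N (ideal_module ?D I)))"
        using H[rule_format, OF i] .
      show ?thesis
      proof (cases "module_isomorphic ?D ?N (ideal_module ?D (carrier ?D))")
        case True
        then obtain f where f: "f \<in> module_iso ?D ?N (ideal_module ?D (carrier ?D))" unfolding module_isomorphic_def by auto
        obtain x where "x \<in> carrier ?N" "\<forall>y\<in>carrier ?N. \<exists>d\<in>carrier ?D. y = d \<odot>\<^bsub>?N\<^esub> x"
          using iso_gen[OF modN f gen_ring_module(2)[OF cD] gen_ring_module(1)[OF cD]] by blast
        then show ?thesis using module.cyclic_mult[OF modN] by blast
      next
        case F1: False
        show ?thesis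
        proof (cases "\<exists>I. ideal I ?D \<and> I \<noteq> {\<zero>\<^bsub>R\<^esub>} \<and> module_isomorphic ?D ?N (quotient_module ?D I)")
          case True
          then obtain I f where I: "ideal I ?D" and f: "f \<in> module_iso ?D ?N (quotient_module ?D I)"
            unfolding module_isomorphic_def by auto
          obtain x where "x \<in> carrier ?N" "\<forall>y\<in>carrier ?N. \<exists>d\<in>carrier ?D. y = d \<odot>\<^bsub>?N\<^esub> x"
            using iso_gen[OF modN f gen_quot_module(2)[OF cD I] gen_quot_module(1)[OF cD I]] by blast
          then show ?thesis using module.cyclic_mult[OF modN] by blast
        next
          case False
          from Hi F1 False have "\<exists>I. ideal I ?D \<and> I \<noteq> {\<zero>\<^bsub>R\<^esub>} \<and> module_isomorphic ?D ?N (ideal_module ?D I)"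
            by blast
          then obtain I where I: "ideal I ?D" and iso: "module_isomorphic ?D ?N (ideal_module ?D I)" by blast
          from iso obtain f where f: "f \<in> module_iso ?D ?N (ideal_module ?D I)" unfolding module_isomorphic_def by blast
          have mrD: "multiplication_ring ?D" by (rule comp_mult_ring[OF R mr ei[OF i]])
          show ?thesis by (rule ideal_target_mult[OF cD mrD I modN f])
        qed
      qed
    qed
    then have "\<forall>i<n. multiplication_module (component_ring R (e i)) (component_module M (e i))" by blast
    then show "multiplication_module R M" by (rule assemble[OF M e orth sum1])
  qed
qed


end
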